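(* Let $(A,S,P)$ be a $\mathbb P$-contraction on a Hilbert space $\mathcal H$. There exists $X\in\mathcal B(\mathcal D_P)$ with numerical radius $\omega(X)\le1$ such that $I-A^*A-\frac14S^*S=D_PXD_P$ if and only if $\pm\big(I-A^*A-\frac14S^*S\big)\le D_P^2$; moreover such a solution $X$, when it exists, is unique. Furthermore, if such an $X$ exists, then $X\ge0$ if and only if $A^*A+\frac14S^*S\le I$ (i.e. $(A,S/2)$ is a spherical contraction).
   Context: The pentablock is $\mathbb P=\{(a_{21},\operatorname{tr}A_0,\det A_0): A_0=[a_{ij}]\in M_2(\mathbb C),\ \|A_0\|<1\}$; a $\mathbb P$-contraction is a commuting operator triple having $\overline{\mathbb P}$ as a spectral set (Taylor joint spectrum in $\overline{\mathbb P}$ and $\|f(A,S,P)\|\le\sup_{\overline{\mathbb P}}|f|$ for rational $f$ regular on $\overline{\mathbb P}$). $D_P=(I-P^*P)^{1/2}$ and $\mathcal D_P=\overline{\operatorname{Ran}}\,D_P$; in $D_PXD_P$, $D_P$ is regarded first as a map $\mathcal H\to\mathcal D_P$ and then as a map $\mathcal D_P\to\mathcal H$. *)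

theory Defs
  imports "HOL-Analysis.Analysis"
begin

text \<open>A complex Hilbert space: a complete normed space with a complex scalar
multiplication compatible with the real one, and a complex inner product
(linear in the second argument, conjugate-linear in the first) inducing the norm.\<close>

class chilbert = banach +
  fixes cscale :: "complex \<Rightarrow> 'a \<Rightarrow> 'a"
    and cinner :: "'a \<Rightarrow> 'a \<Rightarrow> complex"
  assumes cscale_add_right: "cscale c (x + y) = cscale c x + cscale c y"
    and cscale_add_left: "cscale (c + d) x = cscale c x + cscale d x"
    and cscale_cscale: "cscale c (cscale d x) = cscale (c * d) x"
    and cscale_one: "cscale 1 x = x"
    and scaleR_cscale: "scaleR r x = cscale (complex_of_real r) x"
    and cinner_commute: "cinner x y = cnj (cinner y x)"
    and cinner_add_right: "cinner x (y + z) = cinner x y + cinner x z"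
    and cinner_cscale_right: "cinner x (cscale c y) = c * cinner x y"
    and cinner_self_nonneg: "0 \<le> Re (cinner x x)"
    and norm_cinner: "norm x = sqrt (Re (cinner x x))"

definition bounded_op :: "('a::chilbert \<Rightarrow> 'a) \<Rightarrow> bool" where
  "bounded_op T \<longleftrightarrow> (\<forall>x y. T (x + y) = T x + T y) \<and>
     (\<forall>c x. T (cscale c x) = cscale c (T x)) \<and> (\<exists>K. \<forall>x. norm (T x) \<le> K * norm x)"

definition adj :: "('a::chilbert \<Rightarrow> 'a) \<Rightarrow> ('a \<Rightarrow> 'a)" where
  "adj T = (SOME T'. bounded_op T' \<and> (\<forall>x y. cinner (T' x) y = cinner x (T y)))"

definition op_le :: "('a::chilbert \<Rightarrow> 'a) \<Rightarrow> ('a \<Rightarrow> 'a) \<Rightarrow> bool" where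
  "op_le S T \<longleftrightarrow> (\<forall>x. Im (cinner x (T x - S x)) = 0 \<and> 0 \<le> Re (cinner x (T x - S x)))"

definition positive_op :: "('a::chilbert \<Rightarrow> 'a) \<Rightarrow> bool" where
  "positive_op T \<longleftrightarrow> op_le (\<lambda>x. 0) T"

definition op_sqrt :: "('a::chilbert \<Rightarrow> 'a) \<Rightarrow> ('a \<Rightarrow> 'a)" where
  "op_sqrt T = (THE R. bounded_op R \<and> positive_op R \<and> R \<circ> R = T)"

definition defect_op :: "('a::chilbert \<Rightarrow> 'a) \<Rightarrow> ('a \<Rightarrow> 'a)" where
  "defect_op P = op_sqrt (\<lambda>x. x - adj P (P x))"

definition defect_space :: "('a::chilbert \<Rightarrow> 'a) \<Rightarrow> 'a set" where
  "defect_space P = closure (range (defect_op P))"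

text \<open>Bounded operators on a (closed) subspace \<open>M\<close>, represented by functions on the
whole space whose behaviour outside \<open>M\<close> is irrelevant.\<close>
definition bounded_op_on :: "'a::chilbert set \<Rightarrow> ('a \<Rightarrow> 'a) \<Rightarrow> bool" where
  "bounded_op_on M X \<longleftrightarrow> (\<forall>x\<in>M. X x \<in> M) \<and>
     (\<forall>x\<in>M. \<forall>y\<in>M. X (x + y) = X x + X y) \<and>
     (\<forall>c. \<forall>x\<in>M. X (cscale c x) = cscale c (X x)) \<and>
     (\<exists>K. \<forall>x\<in>M. norm (X x) \<le> K * norm x)"

text \<open>Numerical radius of an operator on \<open>M\<close> (taken to be 0 when \<open>M = {0}\<close>).\<close>
definition numerical_radius :: "'a::chilbert set \<Rightarrow> ('a \<Rightarrow> 'a) \<Rightarrow> real" where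
  "numerical_radius M X = Sup (insert 0 {cmod (cinner x (X x)) | x. x \<in> M \<and> norm x = 1})"

definition positive_on :: "'a::chilbert set \<Rightarrow> ('a \<Rightarrow> 'a) \<Rightarrow> bool" where
  "positive_on M X \<longleftrightarrow> (\<forall>x\<in>M. Im (cinner x (X x)) = 0 \<and> 0 \<le> Re (cinner x (X x)))"

definition mat2_norm :: "complex \<Rightarrow> complex \<Rightarrow> complex \<Rightarrow> complex \<Rightarrow> real" where
  "mat2_norm a11 a12 a21 a22 =
     Sup {sqrt ((cmod (a11 * u + a12 * v))\<^sup>2 + (cmod (a21 * u + a22 * v))\<^sup>2) | u v.
            (cmod u)\<^sup>2 + (cmod v)\<^sup>2 = 1}"

definition pentablock :: "(complex \<times> complex \<times> complex) set" where
  "pentablock = {(a21, a11 + a22, a11 * a22 - a12 * a21) | a11 a12 a21 a22.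
                   mat2_norm a11 a12 a21 a22 < 1}"

text \<open>Exactness of the Koszul complex
  \<open>0 \<rightarrow> H \<rightarrow> H\<^sup>3 \<rightarrow> H\<^sup>3 \<rightarrow> H \<rightarrow> 0\<close> of the triple \<open>(a,b,c)\<close>.\<close>
definition koszul_d0 :: "('a::chilbert \<Rightarrow> 'a) \<Rightarrow> ('a \<Rightarrow> 'a) \<Rightarrow> ('a \<Rightarrow> 'a) \<Rightarrow> 'a \<Rightarrow> 'a \<times> 'a \<times> 'a" where
  "koszul_d0 a b c x = (a x, b x, c x)"

definition koszul_d1 :: "('a::chilbert \<Rightarrow> 'a) \<Rightarrow> ('a \<Rightarrow> 'a) \<Rightarrow> ('a \<Rightarrow> 'a) \<Rightarrow> 'a \<times> 'a \<times> 'a \<Rightarrow> 'a \<times> 'a \<times> 'a" where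
  "koszul_d1 a b c = (\<lambda>(x1, x2, x3). (a x2 - b x1, a x3 - c x1, b x3 - c x2))"

definition koszul_d2 :: "('a::chilbert \<Rightarrow> 'a) \<Rightarrow> ('a \<Rightarrow> 'a) \<Rightarrow> ('a \<Rightarrow> 'a) \<Rightarrow> 'a \<times> 'a \<times> 'a \<Rightarrow> 'a" where
  "koszul_d2 a b c = (\<lambda>(y12, y13, y23). c y12 - b y13 + a y23)"

definition koszul_exact :: "('a::chilbert \<Rightarrow> 'a) \<Rightarrow> ('a \<Rightarrow> 'a) \<Rightarrow> ('a \<Rightarrow> 'a) \<Rightarrow> bool" where
  "koszul_exact a b c \<longleftrightarrow>
     inj (koszul_d0 a b c) \<and>
     range (koszul_d0 a b c) = {v. koszul_d1 a b c v = 0} \<and>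
     range (koszul_d1 a b c) = {w. koszul_d2 a b c w = 0} \<and>
     surj (koszul_d2 a b c)"

definition taylor_spectrum :: "('a::chilbert \<Rightarrow> 'a) \<Rightarrow> ('a \<Rightarrow> 'a) \<Rightarrow> ('a \<Rightarrow> 'a) \<Rightarrow> (complex \<times> complex \<times> complex) set" where
  "taylor_spectrum a b c = {(l1, l2, l3). \<not> koszul_exact (\<lambda>x. a x - cscale l1 x)
        (\<lambda>x. b x - cscale l2 x) (\<lambda>x. c x - cscale l3 x)}"

text \<open>A polynomial in three variables is a finitely supported coefficient function.\<close>
definition poly3_eval :: "(nat \<times> nat \<times> nat \<Rightarrow> complex) \<Rightarrow> complex \<times> complex \<times> complex \<Rightarrow> complex" where
  "poly3_eval p = (\<lambda>(z1, z2, z3). \<Sum>(i, j, k)\<in>{m. p m \<noteq> 0}. p (i, j, k) * z1 ^ i * z2 ^ j * z3 ^ k)"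

definition poly3_op :: "(nat \<times> nat \<times> nat \<Rightarrow> complex) \<Rightarrow> ('a::chilbert \<Rightarrow> 'a) \<Rightarrow> ('a \<Rightarrow> 'a) \<Rightarrow> ('a \<Rightarrow> 'a) \<Rightarrow> 'a \<Rightarrow> 'a" where
  "poly3_op p a b c = (\<lambda>x. \<Sum>(i, j, k)\<in>{m. p m \<noteq> 0}. cscale (p (i, j, k)) ((a ^^ i) ((b ^^ j) ((c ^^ k) x))))"

definition rat3_op :: "(nat \<times> nat \<times> nat \<Rightarrow> complex) \<Rightarrow> (nat \<times> nat \<times> nat \<Rightarrow> complex) \<Rightarrow> ('a::chilbert \<Rightarrow> 'a) \<Rightarrow> ('a \<Rightarrow> 'a) \<Rightarrow> ('a \<Rightarrow> 'a) \<Rightarrow> 'a \<Rightarrow> 'a" where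
  "rat3_op p q a b c = poly3_op p a b c \<circ> inv (poly3_op q a b c)"

definition spectral_set :: "(complex \<times> complex \<times> complex) set \<Rightarrow> ('a::chilbert \<Rightarrow> 'a) \<Rightarrow> ('a \<Rightarrow> 'a) \<Rightarrow> ('a \<Rightarrow> 'a) \<Rightarrow> bool" where
  "spectral_set K a b c \<longleftrightarrow> taylor_spectrum a b c \<subseteq> K \<and>
     (\<forall>p q. finite {m. p m \<noteq> 0} \<longrightarrow> finite {m. q m \<noteq> 0} \<longrightarrow>
        (\<forall>z\<in>K. poly3_eval q z \<noteq> 0) \<longrightarrow>
        onorm (rat3_op p q a b c) \<le> Sup {cmod (poly3_eval p z / poly3_eval q z) | z. z \<in> K})"

definition P_contraction :: "('a::chilbert \<Rightarrow> 'a) \<Rightarrow> ('a \<Rightarrow> 'a) \<Rightarrow> ('a \<Rightarrow> 'a) \<Rightarrow> bool" where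
  "P_contraction A S P \<longleftrightarrow> bounded_op A \<and> bounded_op S \<and> bounded_op P \<and>
     A \<circ> S = S \<circ> A \<and> A \<circ> P = P \<circ> A \<and> S \<circ> P = P \<circ> S \<and>
     spectral_set (closure pentablock) A S P"

end

theory Submission
  imports Defs
begin


lemma cscale_zero_left[simp]: "cscale 0 x = 0"
  using scaleR_cscale[of 0 x] by simp

lemma cscale_zero_right[simp]: "cscale c 0 = 0"
  using cscale_add_right[of c 0 0] by simp

lemma cscale_minus_right: "cscale c (- x) = - cscale c x"
proof -
  have "cscale c (-x) + cscale c x = 0" by (simp only: cscale_add_right[symmetric] add.left_inverse cscale_zero_right)
  then show ?thesis by (simp add: eq_neg_iff_add_eq_0)
qed
lemma cscale_diff_right: "cscale c (x - y) = cscale c x - cscale c y"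
  by (simp only: diff_conv_add_uminus cscale_add_right cscale_minus_right)

lemma cscale_minus_left: "cscale (- c) x = - cscale c x"
proof -
  have "cscale (-c) x + cscale c x = 0" by (simp only: cscale_add_left[symmetric] add.left_inverse cscale_zero_left)
  then show ?thesis by (simp add: eq_neg_iff_add_eq_0)
qed

lemma cscale_diff_left: "cscale (c - d) x = cscale c x - cscale d x"
  by (simp only: diff_conv_add_uminus cscale_add_left cscale_minus_left)

lemma cscale_of_real: "cscale (complex_of_real r) x = scaleR r x"
  by (simp only: scaleR_cscale)

lemma cinner_add_left: "cinner (x + y) z = cinner x z + cinner y z"
  by (metis cinner_add_right cinner_commute complex_cnj_add)

lemma cinner_cscale_left: "cinner (cscale c x) y = cnj c * cinner x y"
  by (metis cinner_cscale_right cinner_commute complex_cnj_mult)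

lemma cinner_zero_right[simp]: "cinner x 0 = 0"
proof -
  have "cinner x (0 + 0) = cinner x 0 + cinner x 0" by (rule cinner_add_right)
  then show ?thesis by simp
qed

lemma cinner_zero_left[simp]: "cinner 0 x = 0"
  by (metis cinner_commute cinner_zero_right complex_cnj_zero)

lemma cinner_minus_right: "cinner x (- y) = - cinner x y"
proof -
  have "cinner x (-y) + cinner x y = 0" by (simp only: cinner_add_right[symmetric] add.left_inverse cinner_zero_right)
  then show ?thesis by (simp add: eq_neg_iff_add_eq_0)
qed

lemma cinner_minus_left: "cinner (- x) y = - cinner x y"
  by (metis cinner_commute cinner_minus_right complex_cnj_minus)

lemma cinner_diff_right: "cinner x (y - z) = cinner x y - cinner x z"
  by (simp only: diff_conv_add_uminus cinner_add_right cinner_minus_right)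

lemma cinner_diff_left: "cinner (x - y) z = cinner x z - cinner y z"
  by (simp only: diff_conv_add_uminus cinner_add_left cinner_minus_left)

lemma cinner_scaleR_right: "cinner x (scaleR r y) = complex_of_real r * cinner x y"
  by (simp only: scaleR_cscale cinner_cscale_right)

lemma cinner_scaleR_left: "cinner (scaleR r x) y = complex_of_real r * cinner x y"
  by (simp only: scaleR_cscale cinner_cscale_left complex_cnj_complex_of_real)

lemma Im_cinner_self[simp]: "Im (cinner x x) = 0"
proof -
  have "cinner x x = cnj (cinner x x)" by (rule cinner_commute)
  then show ?thesis by (metis Reals_cnj_iff complex_is_Real_iff)
qed

lemma Re_cinner_self: "Re (cinner x x) = (norm x)\<^sup>2"
  using norm_cinner[of x] cinner_self_nonneg[of x] by simp

lemma cinner_self: "cinner x x = complex_of_real ((norm x)\<^sup>2)"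
  by (simp add: complex_eq_iff Re_cinner_self)

lemma cinner_self_eq_0[simp]: "cinner x x = 0 \<longleftrightarrow> x = 0"
  by (simp add: cinner_self)

lemma norm_cscale: "norm (cscale c x) = cmod c * norm x"
proof -
  have "cinner (cscale c x) (cscale c x) = (cnj c * c) * cinner x x"
    by (simp add: cinner_cscale_left cinner_cscale_right ac_simps)
  also have "\<dots> = complex_of_real ((cmod c)\<^sup>2) * complex_of_real ((norm x)\<^sup>2)"
    using complex_norm_square[of c] by (simp add: cinner_self mult.commute)
  also have "\<dots> = complex_of_real ((cmod c * norm x)\<^sup>2)"
    by (simp add: power_mult_distrib)
  finally have "(norm (cscale c x))\<^sup>2 = (cmod c * norm x)\<^sup>2"
    by (metis cinner_self of_real_eq_iff)
  then show ?thesis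
    by (meson mult_nonneg_nonneg norm_ge_zero power2_eq_imp_eq)
qed

lemma cs_alg:
  fixes a :: complex and nn :: real
  assumes "nn > 0"
  shows "(cnj a / of_real nn) * a + cnj (cnj a / of_real nn) * cnj a - cnj (cnj a / of_real nn) * (cnj a / of_real nn) * of_real nn
     = of_real ((cmod a)\<^sup>2 / nn)"
proof -
  have nz: "complex_of_real nn \<noteq> 0" using assms by simp
  have "(cnj a / of_real nn) * a + cnj (cnj a / of_real nn) * cnj a - cnj (cnj a / of_real nn) * (cnj a / of_real nn) * of_real nn
      = cnj a * a / of_real nn"
    using nz by (simp add: field_simps)
  also have "\<dots> = of_real ((cmod a)\<^sup>2) / of_real nn"
    using complex_norm_square[of a] by (simp add: mult.commute)
  finally show ?thesis by simp
qed

lemma cauchy_schwarz: "cmod (cinner x y) \<le> norm x * norm y"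
proof (cases "y = 0")
  case True then show ?thesis by simp
next
  case False
  define a where "a = cinner x y"
  define nn where "nn = (norm y)\<^sup>2"
  define t where "t = cnj a / complex_of_real nn"
  have ny: "nn > 0" using False by (simp add: nn_def)
  have c: "cinner y x = cnj a" unfolding a_def by (rule cinner_commute)
  have yy: "cinner y y = of_real nn" unfolding nn_def by (rule cinner_self)
  have "cinner (x - cscale t y) (x - cscale t y)
      = cinner x x - (t * a + cnj t * cnj a - cnj t * t * of_real nn)"
    unfolding cinner_diff_left cinner_diff_right cinner_cscale_left cinner_cscale_right c yy a_def[symmetric]
    by (simp add: algebra_simps)
  also have "\<dots> = complex_of_real ((norm x)\<^sup>2 - (cmod a)\<^sup>2 / nn)"
    unfolding t_def cs_alg[OF ny] cinner_self by simp
  finally have "0 \<le> (norm x)\<^sup>2 - (cmod a)\<^sup>2 / nn"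
    using cinner_self_nonneg[of "x - cscale t y"] by simp
  then have "(cmod a)\<^sup>2 \<le> (norm x * norm y)\<^sup>2"
    using ny by (simp add: nn_def field_simps power_mult_distrib)
  then show ?thesis unfolding a_def
    by (meson mult_nonneg_nonneg norm_ge_zero power2_le_imp_le)
qed

lemma bounded_bilinear_cinner: "bounded_bilinear (cinner :: 'a::chilbert \<Rightarrow> 'a \<Rightarrow> complex)"
proof
  fix a a' b b' :: 'a and r :: real
  show "cinner (a + a') b = cinner a b + cinner a' b" by (rule cinner_add_left)
  show "cinner a (b + b') = cinner a b + cinner a b'" by (rule cinner_add_right)
  show "cinner (r *\<^sub>R a) b = r *\<^sub>R cinner a b" by (simp add: cinner_scaleR_left scaleR_conv_of_real)
  show "cinner a (r *\<^sub>R b) = r *\<^sub>R cinner a b" by (simp add: cinner_scaleR_right scaleR_conv_of_real)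
  show "\<exists>K. \<forall>a b. norm (cinner a b) \<le> norm a * norm b * K"
    by (rule exI[of _ 1]) (simp add: cauchy_schwarz)
qed

lemma bounded_linear_cscale: "bounded_linear (cscale c :: 'a::chilbert \<Rightarrow> 'a)"
proof
  fix x y :: 'a and r :: real
  show "cscale c (x + y) = cscale c x + cscale c y" by (rule cscale_add_right)
  show "cscale c (r *\<^sub>R x) = r *\<^sub>R cscale c x"
    by (simp add: scaleR_cscale cscale_cscale mult.commute)
  show "\<exists>K. \<forall>x. norm (cscale c x) \<le> norm x * K"
    by (rule exI[of _ "cmod c"]) (simp add: norm_cscale mult.commute)
qed

lemma cinner_ext: "(\<And>y. cinner x y = cinner x' y) \<Longrightarrow> x = x'"
proof -
  assume h: "\<And>y. cinner x y = cinner x' y"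
  have "cinner (x - x') (x - x') = 0" using h[of "x - x'"] by (simp add: cinner_diff_left)
  then show "x = x'" by simp
qed

lemma cinner_ext_right: "(\<And>y. cinner y x = cinner y x') \<Longrightarrow> x = x'"
  by (metis cinner_commute cinner_ext)


lemma norm_add_sq: "(norm (x + y))\<^sup>2 = (norm x)\<^sup>2 + 2 * Re (cinner x y) + (norm (y::'a::chilbert))\<^sup>2"
proof -
  have "Re (cinner y x) = Re (cinner x y)" by (subst cinner_commute) simp
  then show ?thesis
    by (simp add: Re_cinner_self[symmetric] cinner_add_left cinner_add_right)
qed

lemma norm_diff_sq: "(norm (x - y))\<^sup>2 = (norm x)\<^sup>2 - 2 * Re (cinner x y) + (norm (y::'a::chilbert))\<^sup>2"
proof -
  have "Re (cinner y x) = Re (cinner x y)" by (subst cinner_commute) simp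
  then show ?thesis
    by (simp add: Re_cinner_self[symmetric] cinner_diff_left cinner_diff_right)
qed

lemma parallelogram: "(norm (x + y))\<^sup>2 + (norm (x - y))\<^sup>2 = 2 * (norm x)\<^sup>2 + 2 * (norm (y::'a::chilbert))\<^sup>2"
  by (simp add: norm_add_sq norm_diff_sq)

lemma quad_zero:
  fixes r s :: real
  assumes "s \<ge> 0" "\<And>t. 0 \<le> t\<^sup>2 * s - 2 * t * r"
  shows "r = 0"
proof -
  define t where "t = r / (s + 1)"
  have "0 \<le> t\<^sup>2 * s - 2 * t * r" by (rule assms(2))
  then have "0 \<le> (t\<^sup>2 * s - 2 * t * r) * (s + 1)\<^sup>2" using assms(1) by simp
  also have "(t\<^sup>2 * s - 2 * t * r) * (s + 1)\<^sup>2 = - (r\<^sup>2 * (s + 2))"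
  proof -
    have "s + 1 \<noteq> 0" using assms(1) by simp
    then have "t * (s + 1) = r" by (simp add: t_def)
    moreover have "(t\<^sup>2 * s - 2 * t * r) * (s + 1)\<^sup>2 = s * (t * (s + 1))\<^sup>2 - 2 * r * (s + 1) * (t * (s + 1))"
      by (simp add: power2_eq_square algebra_simps)
    ultimately show ?thesis by (simp add: power2_eq_square algebra_simps)
  qed
  finally have "r\<^sup>2 * (s + 2) \<le> 0" by simp
  then have "r\<^sup>2 \<le> 0" using assms(1)
    by (simp add: mult_le_0_iff)
  then show ?thesis by simp
qed

definition csubspace :: "'a::chilbert set \<Rightarrow> bool" where
  "csubspace V \<longleftrightarrow> 0 \<in> V \<and> (\<forall>x\<in>V. \<forall>y\<in>V. x + y \<in> V) \<and> (\<forall>c. \<forall>x\<in>V. cscale c x \<in> V)"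

lemma cscale_minus_one: "cscale (-1) x = - x"
  by (simp add: cscale_minus_left cscale_one)

lemma csubspace_0: "csubspace V \<Longrightarrow> 0 \<in> V"
  by (simp add: csubspace_def)

lemma csubspace_add: "csubspace V \<Longrightarrow> x \<in> V \<Longrightarrow> y \<in> V \<Longrightarrow> x + y \<in> V"
  by (simp add: csubspace_def)

lemma csubspace_cscale: "csubspace V \<Longrightarrow> x \<in> V \<Longrightarrow> cscale c x \<in> V"
  by (simp add: csubspace_def)

lemma csubspace_minus: "csubspace V \<Longrightarrow> x \<in> V \<Longrightarrow> - x \<in> V"
  by (metis csubspace_cscale cscale_minus_one)

lemma csubspace_diff: "csubspace V \<Longrightarrow> x \<in> V \<Longrightarrow> y \<in> V \<Longrightarrow> x - y \<in> V"
  by (metis csubspace_add csubspace_minus diff_conv_add_uminus)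

lemma csubspace_scaleR: "csubspace V \<Longrightarrow> x \<in> V \<Longrightarrow> scaleR r x \<in> V"
  by (simp add: scaleR_cscale csubspace_cscale)

lemma csubspace_UNIV: "csubspace UNIV"
  by (simp add: csubspace_def)

lemma csubspace_closure:
  assumes "csubspace V" shows "csubspace (closure V)"
  unfolding csubspace_def
proof (intro conjI ballI allI)
  show "0 \<in> closure V" using csubspace_0[OF assms] closure_subset by blast
next
  fix x y assume "x \<in> closure V" "y \<in> closure V"
  then obtain X Y where X: "\<forall>n. X n \<in> V" "X \<longlonglongrightarrow> x" and Y: "\<forall>n. Y n \<in> V" "Y \<longlonglongrightarrow> y"
    unfolding closure_sequential by blast
  have "(\<lambda>n. X n + Y n) \<longlonglongrightarrow> x + y" using X Y by (intro tendsto_add) auto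
  moreover have "\<forall>n. X n + Y n \<in> V" using X Y csubspace_add[OF assms] by blast
  ultimately show "x + y \<in> closure V" unfolding closure_sequential by (intro exI[where x="\<lambda>n. X n + Y n"]) blast
next
  fix c x assume "x \<in> closure V"
  then obtain X where X: "\<forall>n. X n \<in> V" "X \<longlonglongrightarrow> x"
    unfolding closure_sequential by blast
  have "(\<lambda>n. cscale c (X n)) \<longlonglongrightarrow> cscale c x"
    using X by (intro bounded_linear.tendsto[OF bounded_linear_cscale]) auto
  moreover have "\<forall>n. cscale c (X n) \<in> V" using X csubspace_cscale[OF assms] by blast
  ultimately show "cscale c x \<in> closure V" unfolding closure_sequential by (intro exI[where x="\<lambda>n. cscale c (X n)"]) blast
qed


lemma projection_exists:
  fixes x :: "'a::chilbert"
  assumes N: "csubspace N" "closed N"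
  shows "\<exists>p\<in>N. \<forall>n\<in>N. cinner n (x - p) = 0"
proof -
  define d where "d = Inf ((\<lambda>n. norm (x - n)) ` N)"
  have ne: "(\<lambda>n. norm (x - n)) ` N \<noteq> {}" using csubspace_0[OF N(1)] by blast
  have bdd: "bdd_below ((\<lambda>n. norm (x - n)) ` N)" by (rule bdd_belowI[where m=0]) auto
  have dle: "d \<le> norm (x - n)" if "n \<in> N" for n
    unfolding d_def using bdd that by (intro cInf_lower) auto
  have d0: "0 \<le> d" unfolding d_def by (rule cInf_greatest[OF ne]) auto
  have close: "\<exists>n\<in>N. norm (x - n) < d + e" if "e > 0" for e
  proof -
    from that have "Inf ((\<lambda>n. norm (x - n)) ` N) < d + e" unfolding d_def by simp
    from cInf_lessD[OF ne this] show ?thesis by auto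
  qed
  define S where "S k = N \<inter> {n. (norm (x - n))\<^sup>2 \<le> d\<^sup>2 + inverse (real (Suc k))}" for k :: nat
  have Sclosed: "closed (S k)" for k
    unfolding S_def by (intro closed_Int N(2) closed_Collect_le continuous_intros)
  have Sne: "S k \<noteq> {}" for k
  proof -
    let ?y = "d\<^sup>2 + inverse (real (Suc k))"
    have "d < sqrt ?y" by (rule real_less_rsqrt) simp
    then obtain n where n: "n \<in> N" "norm (x - n) < d + (sqrt ?y - d)"
      using close[of "sqrt ?y - d"] by auto
    then have "sqrt ((norm (x - n))\<^sup>2) < sqrt ?y" by simp
    then have "(norm (x - n))\<^sup>2 < ?y" by (simp only: real_sqrt_less_iff)
    then show ?thesis using n unfolding S_def by auto
  qed
  have Sdec: "S k \<subseteq> S m" if "m \<le> k" for m k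
  proof -
    have h: "inverse (real (Suc k)) \<le> inverse (real (Suc m))" using that by (simp add: le_imp_inverse_le)
    show ?thesis unfolding S_def
    proof (rule Int_mono[OF subset_refl], rule subsetI)
      fix y assume "y \<in> {n. (norm (x - n))\<^sup>2 \<le> d\<^sup>2 + inverse (real (Suc k))}"
      then have "(norm (x - y))\<^sup>2 \<le> d\<^sup>2 + inverse (real (Suc k))" by (simp only: mem_Collect_eq)
      then show "y \<in> {n. (norm (x - n))\<^sup>2 \<le> d\<^sup>2 + inverse (real (Suc m))}" using h by (simp only: mem_Collect_eq)
    qed
  qed
  have Sdiam: "\<exists>k. \<forall>a\<in>S k. \<forall>b\<in>S k. dist a b < \<epsilon>" if "\<epsilon> > 0" for \<epsilon>
  proof -
    have "\<epsilon>\<^sup>2 / 4 > 0" using that by simp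
    from reals_Archimedean[OF this] obtain k where k: "inverse (real (Suc k)) < \<epsilon>\<^sup>2 / 4" by blast
    show ?thesis
    proof (intro exI[of _ k] ballI)
      fix a b assume a: "a \<in> S k" and b: "b \<in> S k"
      define \<delta> where "\<delta> = inverse (real (Suc k))"
      define q where "q = scaleR (1/2) (a + b)"
      have qN: "q \<in> N" unfolding q_def using a b N(1) unfolding S_def
        by (intro csubspace_scaleR csubspace_add) auto
      have "d \<le> norm (x - q)" by (rule dle[OF qN])
      then have dq: "(2 * d)\<^sup>2 \<le> (norm ((x - a) + (x - b)))\<^sup>2"
      proof -
        have "(x - a) + (x - b) = scaleR 2 (x - q)" unfolding q_def by (simp add: algebra_simps scaleR_2)
        then have "norm ((x - a) + (x - b)) = 2 * norm (x - q)" by simp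
        then show ?thesis using \<open>d \<le> norm (x - q)\<close> d0 by (simp add: power_mono)
      qed
      have pa: "(norm (x - a))\<^sup>2 \<le> d\<^sup>2 + \<delta>" and pb: "(norm (x - b))\<^sup>2 \<le> d\<^sup>2 + \<delta>"
        using a b unfolding S_def \<delta>_def by auto
      have "(norm ((x - a) - (x - b)))\<^sup>2 = 2 * (norm (x - a))\<^sup>2 + 2 * (norm (x - b))\<^sup>2 - (norm ((x - a) + (x - b)))\<^sup>2"
        using parallelogram[of "x - a" "x - b"] by simp
      also have "\<dots> \<le> 4 * \<delta>" using pa pb dq by (simp add: power_mult_distrib)
      also have "\<dots> < \<epsilon>\<^sup>2" using k unfolding \<delta>_def by simp
      finally have "(dist a b)\<^sup>2 < \<epsilon>\<^sup>2" by (simp add: dist_norm norm_minus_commute)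
      then show "dist a b < \<epsilon>" using that by (simp add: power_less_imp_less_base)
    qed
  qed
  obtain a where aS: "\<And>k. a \<in> S k"
    using decreasing_closed_nest[of S, OF Sclosed Sne Sdec Sdiam] by blast
  have aN: "a \<in> N" using aS[of 0] unfolding S_def by auto
  have amin: "(norm (x - a))\<^sup>2 \<le> (norm (x - n))\<^sup>2" if "n \<in> N" for n
  proof -
    have "(norm (x - a))\<^sup>2 \<le> d\<^sup>2"
    proof (rule field_le_epsilon)
      fix e :: real assume "e > 0"
      from reals_Archimedean[OF this] obtain k where k: "inverse (real (Suc k)) < e" by blast
      have "(norm (x - a))\<^sup>2 \<le> d\<^sup>2 + inverse (real (Suc k))" using aS[of k] unfolding S_def by auto
      then show "(norm (x - a))\<^sup>2 \<le> d\<^sup>2 + e" using k by simp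
    qed
    also have "\<dots> \<le> (norm (x - n))\<^sup>2" using dle[OF that] d0 by (simp add: power_mono)
    finally show ?thesis .
  qed
  define z where "z = x - a"
  have re0: "Re (cinner n z) = 0" if "n \<in> N" for n
  proof (rule quad_zero[of "(norm n)\<^sup>2"])
    fix t :: real
    have "a + scaleR t n \<in> N" using aN that N(1) by (intro csubspace_add csubspace_scaleR)
    then have "(norm z)\<^sup>2 \<le> (norm (z - scaleR t n))\<^sup>2"
      using amin[of "a + scaleR t n"] unfolding z_def by (simp add: algebra_simps)
    also have "\<dots> = (norm z)\<^sup>2 - 2 * (t * Re (cinner n z)) + t\<^sup>2 * (norm n)\<^sup>2"
    proof -
      have "Re (cinner z n) = Re (cinner n z)" by (subst cinner_commute) simp
      then show ?thesis
        by (simp add: norm_diff_sq cinner_scaleR_right power_mult_distrib)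
    qed
    finally show "0 \<le> t\<^sup>2 * (norm n)\<^sup>2 - 2 * t * Re (cinner n z)" by simp
  qed simp
  have "cinner n z = 0" if "n \<in> N" for n
  proof -
    have "cscale \<i> n \<in> N" using N(1) that by (rule csubspace_cscale)
    from re0[OF this] have "Im (cinner n z) = 0" by (simp add: cinner_cscale_left)
    moreover have "Re (cinner n z) = 0" by (rule re0[OF that])
    ultimately show ?thesis by (simp add: complex_eq_iff)
  qed
  then show ?thesis using aN unfolding z_def by blast
qed


lemma riesz_dense:
  fixes f :: "'a::chilbert \<Rightarrow> complex"
  assumes V: "csubspace V"
    and fadd: "\<And>x y. x \<in> V \<Longrightarrow> y \<in> V \<Longrightarrow> f (x + y) = f x + f y"
    and fscale: "\<And>c x. x \<in> V \<Longrightarrow> f (cscale c x) = c * f x"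
    and fbnd: "\<And>x. x \<in> V \<Longrightarrow> cmod (f x) \<le> K * norm x"
    and K: "0 \<le> K"
  shows "\<exists>z\<in>closure V. (\<forall>v\<in>V. f v = cinner z v) \<and> norm z \<le> K"
proof -
  have fdiff: "f (x - y) = f x - f y" if "x \<in> V" "y \<in> V" for x y
  proof -
    have "f (x - y) = f (x + cscale (-1) y)" by (simp add: cscale_minus_one)
    also have "\<dots> = f x + (-1) * f y" using that V by (simp add: fadd fscale csubspace_cscale)
    finally show ?thesis by simp
  qed
  have cV: "csubspace (closure V)" by (rule csubspace_closure[OF V])
  show ?thesis
  proof (cases "\<forall>v\<in>V. f v = 0")
    case True
    then show ?thesis using csubspace_0[OF cV] K by (intro bexI[of _ 0]) auto
  next
    case False
    then obtain v0 where v0: "v0 \<in> V" "f v0 \<noteq> 0" by blast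
    define v1 where "v1 = cscale (inverse (f v0)) v0"
    have v1V: "v1 \<in> V" unfolding v1_def using V v0(1) by (rule csubspace_cscale)
    have fv1: "f v1 = 1" unfolding v1_def using v0 by (simp add: fscale)
    define ker where "ker = {v\<in>V. f v = 0}"
    have kerV: "ker \<subseteq> V" unfolding ker_def by auto
    have cker: "csubspace ker"
      unfolding csubspace_def ker_def
    proof (intro conjI ballI allI)
      show "0 \<in> {v \<in> V. f v = 0}"
        using csubspace_0[OF V] fscale[of 0 0] by simp
    next
      fix x y assume "x \<in> {v \<in> V. f v = 0}" "y \<in> {v \<in> V. f v = 0}"
      then show "x + y \<in> {v \<in> V. f v = 0}" using V by (simp add: fadd csubspace_add)
    next
      fix c x assume "x \<in> {v \<in> V. f v = 0}"
      then show "cscale c x \<in> {v \<in> V. f v = 0}" using V by (simp add: fscale csubspace_cscale)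
    qed
    define N where "N = closure ker"
    have cN: "csubspace N" unfolding N_def by (rule csubspace_closure[OF cker])
    have clN: "closed N" unfolding N_def by simp
    obtain p where pN: "p \<in> N" and orth: "\<And>n. n \<in> N \<Longrightarrow> cinner n (v1 - p) = 0"
      using projection_exists[OF cN clN, of v1] by blast
    define w where "w = v1 - p"
    have w0: "w \<noteq> 0"
    proof
      assume "w = 0"
      then have "v1 \<in> closure ker" using pN unfolding w_def N_def by simp
      moreover have "1 / (K + 1) > 0" using K by simp
      ultimately obtain k where k: "k \<in> ker" "dist k v1 < 1 / (K + 1)"
        unfolding closure_approachable by blast
      have "1 = cmod (f v1 - f k)" using k(1) fv1 unfolding ker_def by simp
      also have "\<dots> = cmod (f (v1 - k))" using v1V k(1) kerV by (subst fdiff) auto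
      also have "\<dots> \<le> K * norm (v1 - k)" using v1V k(1) kerV by (intro fbnd csubspace_diff[OF V]) auto
      also have "\<dots> \<le> K * (1 / (K + 1))" using k(2) K
        by (intro mult_left_mono) (auto simp: dist_norm norm_minus_commute[of v1 k])
      also have "\<dots> < 1" using K by (simp add: field_simps)
      finally show False by simp
    qed
    have key: "cinner w v = f v * cinner w v1" if "v \<in> V" for v
    proof -
      define u where "u = v - cscale (f v) v1"
      have sV: "cscale (f v) v1 \<in> V" using V v1V by (rule csubspace_cscale)
      have uV: "u \<in> V" unfolding u_def using V that sV by (rule csubspace_diff)
      have "f u = f v - f (cscale (f v) v1)" unfolding u_def using that sV by (rule fdiff)
      also have "f (cscale (f v) v1) = f v" using fscale[OF v1V, of "f v"] fv1 by simp
      finally have "f u = 0" by simp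
      then have "u \<in> ker" using uV unfolding ker_def by blast
      then have "u \<in> N" unfolding N_def using closure_subset by blast
      then have "cinner u w = 0" unfolding w_def by (rule orth)
      then have "cinner w u = 0" by (metis cinner_commute complex_cnj_zero)
      then show ?thesis unfolding u_def by (simp add: cinner_diff_right cinner_cscale_right)
    qed
    have wv1: "cinner w v1 = complex_of_real ((norm w)\<^sup>2)"
    proof -
      have "cinner p w = 0" using orth[OF pN] unfolding w_def .
      then have "cinner w p = 0" by (subst cinner_commute) simp
      moreover have "v1 = w + p" unfolding w_def by simp
      ultimately show ?thesis by (simp add: cinner_add_right cinner_self)
    qed
    define z where "z = cscale (complex_of_real (inverse ((norm w)\<^sup>2))) w"
    have repr: "f v = cinner z v" if "v \<in> V" for v
    proof -
      have "cinner z v = complex_of_real (inverse ((norm w)\<^sup>2)) * cinner w v"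
        unfolding z_def by (simp add: cinner_cscale_left)
      also have "\<dots> = f v" using key[OF that] wv1 w0 by simp
      finally show ?thesis by simp
    qed
    have zV: "z \<in> closure V"
    proof -
      have "v1 \<in> closure V" using v1V closure_subset by blast
      moreover have "p \<in> closure V" using pN closure_mono[OF kerV] unfolding N_def by blast
      ultimately show ?thesis unfolding z_def w_def by (intro csubspace_cscale[OF cV] csubspace_diff[OF cV])
    qed
    have "closure V \<subseteq> {y. cmod (cinner z y) \<le> K * norm y}"
    proof (rule closure_minimal)
      show "V \<subseteq> {y. cmod (cinner z y) \<le> K * norm y}" using fbnd repr by auto
      show "closed {y. cmod (cinner z y) \<le> K * norm y}"
        by (intro closed_Collect_le continuous_intros bounded_bilinear.continuous_on[OF bounded_bilinear_cinner])
    qed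
    with zV have "cmod (cinner z z) \<le> K * norm z" by blast
    then have "norm z * norm z \<le> K * norm z" by (simp add: cinner_self power2_eq_square norm_mult)
    then have "norm z \<le> K" using K by (cases "norm z = 0") (auto simp: mult_le_cancel_right)
    then show ?thesis using zV repr by blast
  qed
qed


lemma bounded_op_add: "bounded_op T \<Longrightarrow> T (x + y) = T x + T y"
  by (simp add: bounded_op_def)

lemma bounded_op_cscale: "bounded_op T \<Longrightarrow> T (cscale c x) = cscale c (T x)"
  by (simp add: bounded_op_def)

lemma bounded_op_bound:
  assumes "bounded_op T" obtains K where "K \<ge> 0" "\<And>x. norm (T x) \<le> K * norm x"
proof -
  from assms obtain K where K: "\<And>x. norm (T x) \<le> K * norm x" unfolding bounded_op_def by blast
  have "norm (T x) \<le> max K 0 * norm x" for x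
    using K[of x] by (meson max.cobounded1 mult_right_mono norm_ge_zero order_trans)
  then show ?thesis using that[of "max K 0"] by simp
qed

lemma bounded_op_linear: "bounded_op T \<Longrightarrow> bounded_linear T"
proof -
  assume T: "bounded_op T"
  then obtain K where K: "\<And>x. norm (T x) \<le> K * norm x" using bounded_op_bound[OF T] by blast
  show "bounded_linear T"
  proof
    fix x y :: 'a and r :: real
    show "T (x + y) = T x + T y" by (rule bounded_op_add[OF T])
    show "T (r *\<^sub>R x) = r *\<^sub>R T x" by (simp add: scaleR_cscale bounded_op_cscale[OF T])
    show "\<exists>K. \<forall>x. norm (T x) \<le> norm x * K" by (rule exI[of _ K]) (simp add: K mult.commute)
  qed
qed

lemma bounded_op_zero: "bounded_op T \<Longrightarrow> T 0 = 0"
proof -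
  assume T: "bounded_op T"
  have "T (0 + 0) = T 0 + T 0" by (rule bounded_op_add[OF T])
  then have "T 0 + 0 = T 0 + T 0" by (simp only: add_0_right add_0_left)
  then show "T 0 = 0" by (metis add_left_imp_eq)
qed

lemma bounded_op_minus: "bounded_op T \<Longrightarrow> T (- x) = - T x"
proof -
  assume T: "bounded_op T"
  have "T (- x + x) = T (- x) + T x" by (rule bounded_op_add[OF T])
  then have "T (- x) + T x = 0" using bounded_op_zero[OF T] by (simp only: add.left_inverse)
  then show "T (- x) = - T x" by (rule add_eq_0_iff2[THEN iffD1])
qed

lemma bounded_op_diff: "bounded_op T \<Longrightarrow> T (x - y) = T x - T y"
  by (metis bounded_op_add bounded_op_minus diff_conv_add_uminus)

lemma bounded_opI:
  assumes "\<And>x y. T (x + y) = T x + T y" "\<And>c x. T (cscale c x) = cscale c (T x)"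
    "\<And>x. norm (T x) \<le> K * norm x"
  shows "bounded_op T"
  using assms unfolding bounded_op_def by blast

lemma bounded_op_id: "bounded_op (\<lambda>x. x)"
  by (rule bounded_opI[where K=1]) auto

lemma bounded_op_id': "bounded_op id"
  using bounded_op_id by (simp add: id_def)

lemma bounded_op_compose:
  assumes S: "bounded_op S" and T: "bounded_op T"
  shows "bounded_op (\<lambda>x. S (T x))"
proof -
  obtain K where K: "K \<ge> 0" "\<And>x. norm (S x) \<le> K * norm x" using bounded_op_bound[OF S] by blast
  obtain L where L: "L \<ge> 0" "\<And>x. norm (T x) \<le> L * norm x" using bounded_op_bound[OF T] by blast
  show ?thesis
  proof (rule bounded_opI[where K="K * L"])
    fix x y show "S (T (x + y)) = S (T x) + S (T y)" by (simp add: bounded_op_add S T)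
  next
    fix c x show "S (T (cscale c x)) = cscale c (S (T x))" by (simp add: bounded_op_cscale S T)
  next
    fix x
    have "norm (S (T x)) \<le> K * norm (T x)" by (rule K(2))
    also have "\<dots> \<le> K * (L * norm x)" by (rule mult_left_mono[OF L(2) K(1)])
    finally show "norm (S (T x)) \<le> K * L * norm x" by (simp add: mult.assoc)
  qed
qed

lemma bounded_op_comp: "bounded_op S \<Longrightarrow> bounded_op T \<Longrightarrow> bounded_op (S \<circ> T)"
  using bounded_op_compose by (simp add: comp_def)

lemma bounded_op_plus:
  assumes S: "bounded_op S" and T: "bounded_op T"
  shows "bounded_op (\<lambda>x. S x + T x)"
proof -
  obtain K where K: "K \<ge> 0" "\<And>x. norm (S x) \<le> K * norm x" using bounded_op_bound[OF S] by blast
  obtain L where L: "L \<ge> 0" "\<And>x. norm (T x) \<le> L * norm x" using bounded_op_bound[OF T] by blast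
  show ?thesis
  proof (rule bounded_opI[where K="K + L"])
    fix x y show "S (x + y) + T (x + y) = S x + T x + (S y + T y)" by (simp add: bounded_op_add S T)
  next
    fix c x show "S (cscale c x) + T (cscale c x) = cscale c (S x + T x)"
      by (simp add: bounded_op_cscale S T cscale_add_right)
  next
    fix x
    have "norm (S x + T x) \<le> norm (S x) + norm (T x)" by (rule norm_triangle_ineq)
    also have "\<dots> \<le> K * norm x + L * norm x" using K(2) L(2) by (rule add_mono)
    finally show "norm (S x + T x) \<le> (K + L) * norm x" by (simp add: algebra_simps)
  qed
qed

lemma bounded_op_scale:
  assumes T: "bounded_op T"
  shows "bounded_op (\<lambda>x. cscale a (T x))"
proof -
  obtain L where L: "L \<ge> 0" "\<And>x. norm (T x) \<le> L * norm x" using bounded_op_bound[OF T] by blast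
  show ?thesis
  proof (rule bounded_opI[where K="cmod a * L"])
    fix x y show "cscale a (T (x + y)) = cscale a (T x) + cscale a (T y)" by (simp add: bounded_op_add T cscale_add_right)
  next
    fix c x show "cscale a (T (cscale c x)) = cscale c (cscale a (T x))"
      by (simp add: bounded_op_cscale T cscale_cscale mult.commute)
  next
    fix x
    have "norm (cscale a (T x)) = cmod a * norm (T x)" by (rule norm_cscale)
    also have "\<dots> \<le> cmod a * (L * norm x)" using L(2) by (rule mult_left_mono) simp
    finally show "norm (cscale a (T x)) \<le> cmod a * L * norm x" by (simp add: mult.assoc)
  qed
qed

lemma bounded_op_minus_op:
  assumes S: "bounded_op S" and T: "bounded_op T"
  shows "bounded_op (\<lambda>x. S x - T x)"
proof -
  have "bounded_op (\<lambda>x. S x + cscale (-1) (T x))" by (intro bounded_op_plus bounded_op_scale S T)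
  then show ?thesis by (simp add: cscale_minus_one)
qed

lemma adj_exists:
  assumes A: "bounded_op A"
  shows "\<exists>A'. bounded_op A' \<and> (\<forall>x y. cinner (A' x) y = cinner x (A y))"
proof -
  obtain K where K: "K \<ge> 0" "\<And>x. norm (A x) \<le> K * norm x" using bounded_op_bound[OF A] by blast
  have ex: "\<exists>z. (\<forall>y. cinner z y = cinner x (A y)) \<and> norm z \<le> K * norm x" for x
  proof -
    have "\<exists>z\<in>closure UNIV. (\<forall>v\<in>UNIV. cinner x (A v) = cinner z v) \<and> norm z \<le> norm x * K"
    proof (rule riesz_dense[OF csubspace_UNIV])
      fix u v show "cinner x (A (u + v)) = cinner x (A u) + cinner x (A v)"
        by (simp add: bounded_op_add[OF A] cinner_add_right)
    next
      fix c v show "cinner x (A (cscale c v)) = c * cinner x (A v)"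
        by (simp add: bounded_op_cscale[OF A] cinner_cscale_right)
    next
      fix v
      have "cmod (cinner x (A v)) \<le> norm x * norm (A v)" by (rule cauchy_schwarz)
      also have "\<dots> \<le> norm x * (K * norm v)" using K(2) by (rule mult_left_mono) simp
      finally show "cmod (cinner x (A v)) \<le> norm x * K * norm v" by (simp add: mult.assoc)
    qed (use K in simp)
    then show ?thesis by (auto simp: mult.commute)
  qed
  define A' where "A' x = (SOME z. (\<forall>y. cinner z y = cinner x (A y)) \<and> norm z \<le> K * norm x)" for x
  have A'1: "cinner (A' x) y = cinner x (A y)" for x y
    using someI_ex[OF ex[of x]] unfolding A'_def by blast
  have A'2: "norm (A' x) \<le> K * norm x" for x
    using someI_ex[OF ex[of x]] unfolding A'_def by blast
  have "bounded_op A'"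
  proof (rule bounded_opI[where K=K])
    fix x y show "A' (x + y) = A' x + A' y"
      by (rule cinner_ext) (simp add: A'1 cinner_add_left)
  next
    fix c x show "A' (cscale c x) = cscale c (A' x)"
      by (rule cinner_ext) (simp add: A'1 cinner_cscale_left)
  qed (rule A'2)
  then show ?thesis using A'1 by blast
qed

lemma adj:
  assumes "bounded_op A"
  shows "bounded_op (adj A)" "\<And>x y. cinner (adj A x) y = cinner x (A y)"
proof -
  have "bounded_op (adj A) \<and> (\<forall>x y. cinner (adj A x) y = cinner x (A y))"
    unfolding adj_def by (rule someI_ex[OF adj_exists[OF assms]])
  then show "bounded_op (adj A)" "\<And>x y. cinner (adj A x) y = cinner x (A y)" by auto
qed

lemma adj_right:
  assumes "bounded_op A"
  shows "cinner x (adj A y) = cinner (A x) y"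
  by (metis adj(2)[OF assms] cinner_commute)


lemma cs_R2: "a * c + b * d \<le> sqrt (a\<^sup>2 + b\<^sup>2) * sqrt (c\<^sup>2 + (d::real)\<^sup>2)"
proof -
  have "(a * c + b * d)\<^sup>2 \<le> (a\<^sup>2 + b\<^sup>2) * (c\<^sup>2 + d\<^sup>2)"
  proof -
    have "0 \<le> (a * d - b * c)\<^sup>2" by simp
    then show ?thesis by (simp add: power2_eq_square algebra_simps)
  qed
  then have "sqrt ((a * c + b * d)\<^sup>2) \<le> sqrt ((a\<^sup>2 + b\<^sup>2) * (c\<^sup>2 + d\<^sup>2))"
    by (rule real_sqrt_le_mono)
  then show ?thesis by (simp add: real_sqrt_mult)
qed

lemma mat2_norm_bdd:
  "bdd_above {sqrt ((cmod (a11 * u + a12 * v))\<^sup>2 + (cmod (a21 * u + a22 * v))\<^sup>2) | u v.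
            (cmod u)\<^sup>2 + (cmod v)\<^sup>2 = 1}"
proof (rule bdd_aboveI[where M="cmod a11 + cmod a12 + cmod a21 + cmod a22"])
  fix y assume "y \<in> {sqrt ((cmod (a11 * u + a12 * v))\<^sup>2 + (cmod (a21 * u + a22 * v))\<^sup>2) | u v.
            (cmod u)\<^sup>2 + (cmod v)\<^sup>2 = 1}"
  then obtain u v where y: "y = sqrt ((cmod (a11 * u + a12 * v))\<^sup>2 + (cmod (a21 * u + a22 * v))\<^sup>2)"
    and uv: "(cmod u)\<^sup>2 + (cmod v)\<^sup>2 = 1" by blast
  have u1: "cmod u \<le> 1" using uv by (metis abs_norm_cancel abs_square_le_1 le_add_same_cancel1 zero_le_power2)
  have v1: "cmod v \<le> 1" using uv by (metis abs_norm_cancel abs_square_le_1 le_add_same_cancel2 zero_le_power2)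
  have p: "cmod (a11 * u + a12 * v) \<le> cmod a11 + cmod a12"
  proof -
    have "cmod (a11 * u + a12 * v) \<le> cmod a11 * cmod u + cmod a12 * cmod v"
      by (metis norm_mult norm_triangle_ineq)
    also have "\<dots> \<le> cmod a11 * 1 + cmod a12 * 1"
      using u1 v1 by (intro add_mono mult_left_mono) auto
    finally show ?thesis by simp
  qed
  have q: "cmod (a21 * u + a22 * v) \<le> cmod a21 + cmod a22"
  proof -
    have "cmod (a21 * u + a22 * v) \<le> cmod a21 * cmod u + cmod a22 * cmod v"
      by (metis norm_mult norm_triangle_ineq)
    also have "\<dots> \<le> cmod a21 * 1 + cmod a22 * 1"
      using u1 v1 by (intro add_mono mult_left_mono) auto
    finally show ?thesis by simp
  qed
  have "y \<le> sqrt ((cmod (a11 * u + a12 * v) + cmod (a21 * u + a22 * v))\<^sup>2)"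
    unfolding y by (rule real_sqrt_le_mono) (simp add: power2_eq_square algebra_simps)
  also have "\<dots> = cmod (a11 * u + a12 * v) + cmod (a21 * u + a22 * v)" by simp
  also have "\<dots> \<le> cmod a11 + cmod a12 + cmod a21 + cmod a22" using p q by simp
  finally show "y \<le> cmod a11 + cmod a12 + cmod a21 + cmod a22" .
qed

lemma det_le_mat2_norm:
  assumes "mat2_norm a11 a12 a21 a22 < 1"
  shows "cmod (a11 * a22 - a12 * a21) \<le> 1"
proof -
  define N where "N = mat2_norm a11 a12 a21 a22"
  have e1: "sqrt ((cmod a11)\<^sup>2 + (cmod a21)\<^sup>2) \<le> N"
    unfolding N_def mat2_norm_def
    by (rule cSup_upper[OF _ mat2_norm_bdd]) (rule CollectI, rule exI[of _ 1], rule exI[of _ 0], simp)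
  have e2: "sqrt ((cmod a12)\<^sup>2 + (cmod a22)\<^sup>2) \<le> N"
    unfolding N_def mat2_norm_def
    by (rule cSup_upper[OF _ mat2_norm_bdd]) (rule CollectI, rule exI[of _ 0], rule exI[of _ 1], simp)
  have "cmod (a11 * a22 - a12 * a21) \<le> cmod a11 * cmod a22 + cmod a21 * cmod a12"
    by (metis norm_mult norm_triangle_ineq4 mult.commute)
  also have "\<dots> \<le> sqrt ((cmod a11)\<^sup>2 + (cmod a21)\<^sup>2) * sqrt ((cmod a22)\<^sup>2 + (cmod a12)\<^sup>2)"
    by (rule cs_R2)
  also have "\<dots> \<le> N * N"
  proof -
    have "0 \<le> sqrt ((cmod a11)\<^sup>2 + (cmod a21)\<^sup>2)" by simp
    then have "0 \<le> N" using e1 by linarith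
    then show ?thesis using e1 e2 by (intro mult_mono) (auto simp: add.commute)
  qed
  also have "\<dots> \<le> 1"
  proof -
    have "0 \<le> N" using e1 by (meson order_trans real_sqrt_ge_zero add_nonneg_nonneg zero_le_power2)
    then show ?thesis using assms unfolding N_def[symmetric] by (simp add: mult_le_one)
  qed
  finally show ?thesis .
qed

lemma pentablock_det: "z \<in> closure pentablock \<Longrightarrow> cmod (snd (snd z)) \<le> 1"
proof -
  assume z: "z \<in> closure pentablock"
  have "closure pentablock \<subseteq> {z. cmod (snd (snd z)) \<le> 1}"
  proof (rule closure_minimal)
    show "pentablock \<subseteq> {z. cmod (snd (snd z)) \<le> 1}"
      unfolding pentablock_def using det_le_mat2_norm by auto
    show "closed {z :: complex \<times> complex \<times> complex. cmod (snd (snd z)) \<le> 1}"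
      by (intro closed_Collect_le continuous_intros)
  qed
  then show ?thesis using z by blast
qed

lemma zero_pentablock: "(0, 0, 0) \<in> pentablock"
proof -
  have "{sqrt ((cmod (0 * u + 0 * v))\<^sup>2 + (cmod (0 * u + 0 * v))\<^sup>2) | u v :: complex.
            (cmod u)\<^sup>2 + (cmod v)\<^sup>2 = 1} = {0}"
  proof
    show "{sqrt ((cmod (0 * u + 0 * v))\<^sup>2 + (cmod (0 * u + 0 * v))\<^sup>2) | u v :: complex.
            (cmod u)\<^sup>2 + (cmod v)\<^sup>2 = 1} \<subseteq> {0}" by auto
    have "(cmod (1::complex))\<^sup>2 + (cmod (0::complex))\<^sup>2 = 1" by simp
    show "{0} \<subseteq> {sqrt ((cmod (0 * u + 0 * v))\<^sup>2 + (cmod (0 * u + 0 * v))\<^sup>2) | u v :: complex.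
            (cmod u)\<^sup>2 + (cmod v)\<^sup>2 = 1}"
    proof (rule subsetI)
      fix y :: real assume "y \<in> {0}"
      then have "y = sqrt ((cmod (0 * (1::complex) + 0 * 0))\<^sup>2 + (cmod (0 * (1::complex) + 0 * 0))\<^sup>2)" by simp
      with \<open>(cmod (1::complex))\<^sup>2 + (cmod (0::complex))\<^sup>2 = 1\<close> show "y \<in> {sqrt ((cmod (0 * u + 0 * v))\<^sup>2 + (cmod (0 * u + 0 * v))\<^sup>2) | u v :: complex.
            (cmod u)\<^sup>2 + (cmod v)\<^sup>2 = 1}" by blast
    qed
  qed
  then have "mat2_norm 0 0 0 0 = 0" unfolding mat2_norm_def by simp
  then show ?thesis unfolding pentablock_def by (auto intro!: exI[of _ 0])
qed

lemma P_contraction_bounded: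
  assumes "P_contraction A S P"
  shows "bounded_op A" "bounded_op S" "bounded_op P"
  using assms unfolding P_contraction_def by auto

lemma P_contraction_norm:
  assumes PC: "P_contraction A S P"
  shows "norm (P x) \<le> norm x"
proof -
  define p where "p = (\<lambda>m::nat \<times> nat \<times> nat. if m = (0, 0, 1) then (1::complex) else 0)"
  define q where "q = (\<lambda>m::nat \<times> nat \<times> nat. if m = (0, 0, 0) then (1::complex) else 0)"
  have sp: "{m. p m \<noteq> 0} = {(0, 0, 1)}" unfolding p_def by auto
  have sq: "{m. q m \<noteq> 0} = {(0, 0, 0)}" unfolding q_def by auto
  have ep: "poly3_eval p z = snd (snd z)" for z
    unfolding poly3_eval_def sp by (cases z) (simp add: p_def)
  have eq: "poly3_eval q z = 1" for z
    unfolding poly3_eval_def sq by (cases z) (simp add: q_def)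
  have op: "poly3_op p A S P = P"
    unfolding poly3_op_def sp by (simp add: p_def cscale_one)
  have oq: "poly3_op q A S P = id"
    unfolding poly3_op_def sq by (simp add: q_def cscale_one id_def)
  have rat: "rat3_op p q A S P = P"
    unfolding rat3_op_def op oq by simp
  have "spectral_set (closure pentablock) A S P" using PC unfolding P_contraction_def by blast
  then have ss: "\<And>p q. finite {m. p m \<noteq> 0} \<Longrightarrow> finite {m. q m \<noteq> 0} \<Longrightarrow>
        (\<forall>z\<in>closure pentablock. poly3_eval q z \<noteq> 0) \<Longrightarrow>
        onorm (rat3_op p q A S P) \<le> Sup {cmod (poly3_eval p z / poly3_eval q z) | z. z \<in> closure pentablock}"
    unfolding spectral_set_def by blast
  have "onorm (rat3_op p q A S P) \<le> Sup {cmod (poly3_eval p z / poly3_eval q z) | z. z \<in> closure pentablock}"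
    by (rule ss) (simp_all only: sp sq eq finite.emptyI finite_insert, simp)
  also have "\<dots> \<le> 1"
  proof (rule cSup_least)
    show "{cmod (poly3_eval p z / poly3_eval q z) | z. z \<in> closure pentablock} \<noteq> {}"
      using zero_pentablock closure_subset by blast
    fix y assume "y \<in> {cmod (poly3_eval p z / poly3_eval q z) | z. z \<in> closure pentablock}"
    then show "y \<le> 1" using pentablock_det by (auto simp: ep eq)
  qed
  finally have on: "onorm P \<le> 1" by (simp add: rat)
  have "norm (P x) \<le> onorm P * norm x"
    by (rule onorm[OF bounded_op_linear[OF P_contraction_bounded(3)[OF PC]]])
  also have "\<dots> \<le> 1 * norm x" using on by (rule mult_right_mono) simp
  finally show ?thesis by simp
qed


definition sqc :: "nat \<Rightarrow> real" where
  "sqc n = ((1/2) gchoose n) * (-1) ^ n"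

lemma sqc_0[simp]: "sqc 0 = 1"
  by (simp add: sqc_def)

lemma sqc_poch: "sqc n = pochhammer (- 1/2) n / fact n"
  by (simp add: sqc_def gbinomial_pochhammer power_mult_distrib[symmetric])

lemma sqc_nonpos: "n \<ge> 1 \<Longrightarrow> sqc n \<le> 0"
proof -
  assume "n \<ge> 1"
  then obtain m where m: "n = Suc m" by (cases n) auto
  have "pochhammer (- 1/2 :: real) (Suc m) = (- 1/2) * pochhammer (1/2) m"
    by (simp add: pochhammer_rec)
  moreover have "pochhammer (1/2 :: real) m \<ge> 0" by (rule pochhammer_nonneg) simp
  ultimately have "pochhammer (- 1/2 :: real) n \<le> 0" using m by simp
  then show "sqc n \<le> 0" unfolding sqc_poch by (simp add: divide_nonpos_pos)
qed

lemma sqc_partial_nonneg: "0 \<le> (\<Sum>k\<le>m. sqc k)"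
proof -
  have "(\<Sum>k\<le>m. sqc k) = (-1) ^ m * ((1/2 - 1) gchoose m)"
    unfolding sqc_def by (rule gbinomial_sum_lower_neg)
  also have "\<dots> = pochhammer (1/2 :: real) m / fact m"
    by (simp add: gbinomial_pochhammer power_mult_distrib[symmetric])
  also have "\<dots> \<ge> 0" by (intro divide_nonneg_pos pochhammer_nonneg) auto
  finally show ?thesis .
qed

lemma sqc_abs: "\<bar>sqc k\<bar> = (if k = 0 then 2 else 0) - sqc k"
  using sqc_nonpos[of k] by (cases "k = 0") auto

lemma sqc_abs_summable: "summable (\<lambda>k. \<bar>sqc k\<bar>)"
proof (rule bounded_imp_summable[where B=2])
  fix n
  have "(\<Sum>k\<le>n. \<bar>sqc k\<bar>) = (\<Sum>k\<le>n. (if k = 0 then 2 else 0)) - (\<Sum>k\<le>n. sqc k)"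
    by (simp add: sqc_abs sum_subtractf)
  also have "(\<Sum>k\<le>n. (if k = 0 then 2 else (0::real))) = 2"
    by (simp add: sum.delta)
  finally show "(\<Sum>k\<le>n. \<bar>sqc k\<bar>) \<le> 2" using sqc_partial_nonneg[of n] by simp
qed simp

lemma sqc_square: "(\<Sum>i\<le>k. sqc i * sqc (k - i)) = (if k = 0 then 1 else if k = 1 then -1 else 0)"
proof -
  have "(\<Sum>i\<le>k. sqc i * sqc (k - i)) = (-1) ^ k * (\<Sum>i\<in>{0..k}. ((1/2) gchoose i) * ((1/2) gchoose (k - i)))"
    unfolding sqc_def sum_distrib_left atMost_atLeast0
  proof (rule sum.cong[OF refl])
    fix i assume "i \<in> {0..k}"
    then have "(-1 :: real) ^ k = (-1) ^ i * (-1) ^ (k - i)" by (simp add: power_add[symmetric])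
    then show "((1 / 2 :: real) gchoose i) * (- 1) ^ i * (((1 / 2 :: real) gchoose (k - i)) * (- 1) ^ (k - i)) =
         (- 1) ^ k * (((1 / 2 :: real) gchoose i) * ((1 / 2 :: real) gchoose (k - i)))" by simp
  qed
  also have "(\<Sum>i\<in>{0..k}. ((1/2 :: real) gchoose i) * ((1/2) gchoose (k - i))) = (1/2 + 1/2) gchoose k"
    by (rule gbinomial_Vandermonde)
  also have "((1/2 + 1/2 :: real) gchoose k) = of_nat (1 choose k)"
    using binomial_gbinomial[of 1 k, where 'a=real] by simp
  finally show ?thesis
    by (cases k) (auto simp: binomial_eq_0)
qed

lemma bilinear_Cauchy_product_sums:
  fixes a :: "nat \<Rightarrow> 'a::real_normed_vector" and b :: "nat \<Rightarrow> 'b::real_normed_vector"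
    and prod :: "'a \<Rightarrow> 'b \<Rightarrow> 'c::banach"
  assumes bb: "bounded_bilinear prod"
    and a: "summable (\<lambda>k. norm (a k))" and b: "summable (\<lambda>k. norm (b k))"
    and ca: "summable a" and cb: "summable b"
  shows "(\<lambda>k. \<Sum>i\<le>k. prod (a i) (b (k - i))) sums prod (\<Sum>k. a k) (\<Sum>k. b k)"
proof -
  interpret bounded_bilinear prod by (rule bb)
  obtain K where K: "\<And>x y. norm (prod x y) \<le> norm x * norm y * K" using bounded by blast
  let ?S1 = "\<lambda>n::nat. {..<n} \<times> {..<n}"
  let ?S2 = "\<lambda>n::nat. {(i,j). i + j < n}"
  have S1_mono: "\<And>m n. m \<le> n \<Longrightarrow> ?S1 m \<subseteq> ?S1 n" by auto
  have S2_le_S1: "\<And>n. ?S2 n \<subseteq> ?S1 n" by auto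
  have S1_le_S2: "\<And>n. ?S1 (n div 2) \<subseteq> ?S2 n" by auto
  have finite_S1: "\<And>n. finite (?S1 n)" by simp
  with S2_le_S1 have finite_S2: "\<And>n. finite (?S2 n)" by (rule finite_subset)
  let ?g = "\<lambda>(i,j). prod (a i) (b j)"
  let ?f = "\<lambda>(i,j). norm (a i) * norm (b j)"
  have f_nonneg: "\<And>x. 0 \<le> ?f x" by auto
  then have norm_sum_f: "\<And>A. norm (sum ?f A) = sum ?f A"
    unfolding real_norm_def
    by (simp only: abs_of_nonneg sum_nonneg [rule_format])
  have "(\<lambda>n. prod (\<Sum>k<n. a k) (\<Sum>k<n. b k)) \<longlonglongrightarrow> prod (\<Sum>k. a k) (\<Sum>k. b k)"
    by (intro tendsto summable_LIMSEQ ca cb)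
  moreover have "prod (\<Sum>k<n. a k) (\<Sum>k<n. b k) = sum ?g (?S1 n)" for n
  proof -
    have "prod (\<Sum>k<n. a k) (\<Sum>k<n. b k) = (\<Sum>i<n. prod (a i) (\<Sum>k<n. b k))" by (rule sum_left)
    also have "\<dots> = (\<Sum>i<n. \<Sum>j<n. prod (a i) (b j))" by (subst sum_right) (rule refl)
    also have "\<dots> = sum ?g (?S1 n)" by (rule sum.cartesian_product)
    finally show ?thesis .
  qed
  ultimately have 1: "(\<lambda>n. sum ?g (?S1 n)) \<longlonglongrightarrow> prod (\<Sum>k. a k) (\<Sum>k. b k)" by simp
  have "(\<lambda>n. (\<Sum>k<n. norm (a k)) * (\<Sum>k<n. norm (b k))) \<longlonglongrightarrow> (\<Sum>k. norm (a k)) * (\<Sum>k. norm (b k))"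
    using a b by (intro tendsto_mult summable_LIMSEQ)
  then have "(\<lambda>n. sum ?f (?S1 n)) \<longlonglongrightarrow> (\<Sum>k. norm (a k)) * (\<Sum>k. norm (b k))"
    by (simp only: sum_product sum.Sigma [rule_format] finite_lessThan)
  then have "convergent (\<lambda>n. sum ?f (?S1 n))"
    by (rule convergentI)
  then have Cauchy: "Cauchy (\<lambda>n. sum ?f (?S1 n))"
    by (rule convergent_Cauchy)
  have "Zfun (\<lambda>n. sum ?f (?S1 n - ?S2 n)) sequentially"
  proof (rule ZfunI, simp only: eventually_sequentially norm_sum_f)
    fix r :: real
    assume r: "0 < r"
    from CauchyD [OF Cauchy r] obtain N
      where "\<forall>m\<ge>N. \<forall>n\<ge>N. norm (sum ?f (?S1 m) - sum ?f (?S1 n)) < r" ..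
    then have "\<And>m n. N \<le> n \<Longrightarrow> n \<le> m \<Longrightarrow> norm (sum ?f (?S1 m - ?S1 n)) < r"
      by (simp only: sum_diff finite_S1 S1_mono)
    then have N: "\<And>m n. N \<le> n \<Longrightarrow> n \<le> m \<Longrightarrow> sum ?f (?S1 m - ?S1 n) < r"
      by (simp only: norm_sum_f)
    show "\<exists>N. \<forall>n\<ge>N. sum ?f (?S1 n - ?S2 n) < r"
    proof (intro exI allI impI)
      fix n
      assume "2 * N \<le> n"
      then have n: "N \<le> n div 2" by simp
      have "sum ?f (?S1 n - ?S2 n) \<le> sum ?f (?S1 n - ?S1 (n div 2))"
        by (intro sum_mono2 finite_Diff finite_S1 f_nonneg Diff_mono subset_refl S1_le_S2)
      also have "\<dots> < r"
        using n div_le_dividend by (rule N)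
      finally show "sum ?f (?S1 n - ?S2 n) < r" .
    qed
  qed
  then have "Zfun (\<lambda>n. sum ?g (?S1 n - ?S2 n)) sequentially"
  proof (rule Zfun_imp_Zfun[where K=K], intro always_eventually allI)
    fix n
    have "norm (sum ?g (?S1 n - ?S2 n)) \<le> (\<Sum>x\<in>?S1 n - ?S2 n. norm (?g x))" by (rule norm_sum)
    also have "\<dots> \<le> (\<Sum>x\<in>?S1 n - ?S2 n. ?f x * K)"
      by (intro sum_mono) (auto simp: K)
    also have "\<dots> = norm (sum ?f (?S1 n - ?S2 n)) * K"
      by (simp only: norm_sum_f sum_distrib_right)
    finally show "norm (sum ?g (?S1 n - ?S2 n)) \<le> norm (sum ?f (?S1 n - ?S2 n)) * K" .
  qed
  then have 2: "(\<lambda>n. sum ?g (?S1 n) - sum ?g (?S2 n)) \<longlonglongrightarrow> 0"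
    unfolding tendsto_Zfun_iff diff_0_right
    by (simp only: sum_diff finite_S1 S2_le_S1)
  with 1 have "(\<lambda>n. sum ?g (?S2 n)) \<longlonglongrightarrow> prod (\<Sum>k. a k) (\<Sum>k. b k)"
    by (rule Lim_transform2)
  then show ?thesis
    by (simp only: sums_def sum.triangle_reindex)
qed


locale sacontr =
  fixes C :: "'a::chilbert \<Rightarrow> 'a"
  assumes Cb: "bounded_op C"
    and Csa: "\<And>x y. cinner (C x) y = cinner x (C y)"
    and Cn: "\<And>x. norm (C x) \<le> norm x"
begin

lemma pow_bounded: "bounded_op (C ^^ n)"
  by (induction n) (simp_all add: bounded_op_id bounded_op_compose Cb)

lemma pow_norm: "norm ((C ^^ n) x) \<le> norm x"
proof (induction n)
  case (Suc n)
  have "norm ((C ^^ Suc n) x) = norm (C ((C ^^ n) x))" by simp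
  also have "\<dots> \<le> norm ((C ^^ n) x)" by (rule Cn)
  finally show ?case using Suc by simp
qed simp

lemma pow_sa: "cinner ((C ^^ n) x) y = cinner x ((C ^^ n) y)"
proof (induction n arbitrary: x y)
  case (Suc n)
  have "cinner ((C ^^ Suc n) x) y = cinner (C ((C ^^ n) x)) y" by simp
  also have "\<dots> = cinner ((C ^^ n) x) (C y)" by (rule Csa)
  also have "\<dots> = cinner x ((C ^^ n) (C y))" by (rule Suc)
  also have "(C ^^ n) (C y) = (C ^^ Suc n) y" by (simp add: funpow_swap1)
  finally show ?case .
qed simp

lemma pow_add: "(C ^^ (m + n)) x = (C ^^ m) ((C ^^ n) x)"
  by (simp add: funpow_add)

lemma pow_comm:
  assumes R: "bounded_op R" and RC: "\<And>x. R (C x) = C (R x)"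
  shows "R ((C ^^ n) x) = (C ^^ n) (R x)"
  by (induction n) (simp_all add: RC)

definition pw :: "nat \<Rightarrow> 'a \<Rightarrow>\<^sub>L 'a" where
  "pw n = Blinfun (C ^^ n)"

lemma pw_apply: "blinfun_apply (pw n) = C ^^ n"
  unfolding pw_def by (rule bounded_linear_Blinfun_apply[OF bounded_op_linear[OF pow_bounded]])

lemma pw_norm: "norm (pw n) \<le> 1"
  by (rule norm_blinfun_bound) (simp_all add: pw_apply pow_norm)

lemma pw_comp: "pw m o\<^sub>L pw n = pw (m + n)"
  by (rule blinfun_eqI) (simp add: pw_apply pow_add)

lemma pw_0: "blinfun_apply (pw 0) x = x"
  by (simp add: pw_apply)

lemma pw_1: "blinfun_apply (pw 1) x = C x"
  by (simp add: pw_apply)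

lemma ser_norm_le: "norm (sqc n *\<^sub>R pw n) \<le> \<bar>sqc n\<bar>"
  using pw_norm[of n] by (simp add: mult_left_le)

lemma ser_norm_summable: "summable (\<lambda>n. norm (sqc n *\<^sub>R pw n))"
  by (rule summable_comparison_test[OF _ sqc_abs_summable], rule exI[of _ 0], intro allI impI, simp only: real_norm_def abs_norm_cancel ser_norm_le)

lemma ser_summable: "summable (\<lambda>n. sqc n *\<^sub>R pw n)"
  by (rule summable_norm_cancel[OF ser_norm_summable])

definition Db :: "'a \<Rightarrow>\<^sub>L 'a" where
  "Db = (\<Sum>n. sqc n *\<^sub>R pw n)"

definition Dop :: "'a \<Rightarrow> 'a" where
  "Dop x = blinfun_apply Db x"

lemma D_sums: "(\<lambda>n. sqc n *\<^sub>R (C ^^ n) x) sums Dop x"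
proof -
  have "(\<lambda>n. sqc n *\<^sub>R pw n) sums Db" unfolding Db_def by (rule summable_sums[OF ser_summable])
  from bounded_linear.sums[OF blinfun.bounded_linear_left this, of x]
  show ?thesis unfolding Dop_def by (simp add: pw_apply blinfun.scaleR_left)
qed

lemma DD: "Dop (Dop x) = x - C x"
proof -
  have cp: "(\<lambda>k. \<Sum>i\<le>k. (sqc i *\<^sub>R pw i) o\<^sub>L (sqc (k - i) *\<^sub>R pw (k - i))) sums (Db o\<^sub>L Db)"
    unfolding Db_def
    by (rule bilinear_Cauchy_product_sums[OF bounded_bilinear_blinfun_compose ser_norm_summable ser_norm_summable ser_summable ser_summable])
  have trm: "(\<Sum>i\<le>k. (sqc i *\<^sub>R pw i) o\<^sub>L (sqc (k - i) *\<^sub>R pw (k - i)))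
      = (if k = 0 then pw 0 else if k = 1 then - pw 1 else 0)" for k
  proof -
    have "(\<Sum>i\<le>k. (sqc i *\<^sub>R pw i) o\<^sub>L (sqc (k - i) *\<^sub>R pw (k - i)))
        = (\<Sum>i\<le>k. (sqc i * sqc (k - i)) *\<^sub>R pw k)"
    proof (rule sum.cong[OF refl])
      fix i assume "i \<in> {..k}"
      then have "i + (k - i) = k" by simp
      show "(sqc i *\<^sub>R pw i) o\<^sub>L (sqc (k - i) *\<^sub>R pw (k - i)) = (sqc i * sqc (k - i)) *\<^sub>R pw k"
      proof (rule blinfun_eqI)
        fix y
        have "(C ^^ i) ((C ^^ (k - i)) y) = (C ^^ k) y" using pow_add[of i "k - i" y] \<open>i + (k - i) = k\<close> by simp
        then show "blinfun_apply ((sqc i *\<^sub>R pw i) o\<^sub>L (sqc (k - i) *\<^sub>R pw (k - i))) y = blinfun_apply ((sqc i * sqc (k - i)) *\<^sub>R pw k) y"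
          by (simp add: blinfun.scaleR_right blinfun.scaleR_left pw_apply[symmetric])
      qed
    qed
    also have "\<dots> = (\<Sum>i\<le>k. sqc i * sqc (k - i)) *\<^sub>R pw k"
      by (simp add: scaleR_sum_left)
    also have "\<dots> = (if k = 0 then pw 0 else if k = 1 then - pw 1 else 0)"
      by (simp add: sqc_square)
    finally show ?thesis .
  qed
  have s1: "(\<lambda>k::nat. if k = 0 then pw 0 else 0) sums pw 0"
    using sums_single[of 0 "\<lambda>_. pw 0"] by simp
  have s2: "(\<lambda>k::nat. if k = 1 then - pw 1 else 0) sums (- pw 1)"
    using sums_single[of 1 "\<lambda>_. - pw 1"] by simp
  have "(\<lambda>k::nat. (if k = 0 then pw 0 else 0) + (if k = 1 then - pw 1 else 0)) sums (pw 0 + - pw 1)"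
    by (rule sums_add[OF s1 s2])
  moreover have "(\<lambda>k::nat. (if k = 0 then pw 0 else 0) + (if k = 1 then - pw 1 else 0))
      = (\<lambda>k::nat. if k = 0 then pw 0 else if k = 1 then - pw 1 else 0)" by auto
  ultimately have "(\<lambda>k::nat. if k = 0 then pw 0 else if k = 1 then - pw 1 else 0) sums (pw 0 - pw 1)"
    by simp
  moreover have "(\<lambda>k::nat. if k = 0 then pw 0 else if k = 1 then - pw 1 else 0) sums (Db o\<^sub>L Db)"
    using cp unfolding trm .
  ultimately have "Db o\<^sub>L Db = pw 0 - pw 1" by (rule sums_unique2[rotated])
  then have "blinfun_apply (Db o\<^sub>L Db) x = blinfun_apply (pw 0 - pw 1) x" by simp
  then show ?thesis unfolding Dop_def by (simp add: blinfun.diff_left pw_apply)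
qed

lemma D_bounded: "bounded_op Dop"
proof (rule bounded_opI[where K="norm Db"])
  fix x y show "Dop (x + y) = Dop x + Dop y" unfolding Dop_def by (rule blinfun.add_right)
next
  fix c x
  have "(\<lambda>n. sqc n *\<^sub>R (C ^^ n) (cscale c x)) = (\<lambda>n. cscale c (sqc n *\<^sub>R (C ^^ n) x))"
    by (simp add: bounded_op_cscale[OF pow_bounded] scaleR_cscale cscale_cscale mult.commute)
  then have "(\<lambda>n. cscale c (sqc n *\<^sub>R (C ^^ n) x)) sums Dop (cscale c x)" using D_sums[of "cscale c x"] by simp
  moreover have "(\<lambda>n. cscale c (sqc n *\<^sub>R (C ^^ n) x)) sums cscale c (Dop x)"
    by (rule bounded_linear.sums[OF bounded_linear_cscale D_sums])
  ultimately show "Dop (cscale c x) = cscale c (Dop x)" by (rule sums_unique2)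
next
  fix x show "norm (Dop x) \<le> norm Db * norm x" unfolding Dop_def by (rule norm_blinfun)
qed

lemma D_pos: "Im (cinner x (Dop x)) = 0 \<and> 0 \<le> Re (cinner x (Dop x))"
proof -
  define r where "r n = cinner x ((C ^^ n) x)" for n
  have rs: "(\<lambda>n. complex_of_real (sqc n) * r n) sums cinner x (Dop x)"
  proof -
    have "(\<lambda>n. cinner x (sqc n *\<^sub>R (C ^^ n) x)) sums cinner x (Dop x)"
      by (rule bounded_linear.sums[OF bounded_bilinear.bounded_linear_right[OF bounded_bilinear_cinner] D_sums])
    then show ?thesis by (simp add: r_def cinner_scaleR_right)
  qed
  have rIm: "Im (r n) = 0" for n
  proof -
    have "r n = cinner ((C ^^ n) x) x" unfolding r_def by (simp add: pow_sa)
    also have "\<dots> = cnj (r n)" unfolding r_def by (rule cinner_commute)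
    finally show ?thesis by (metis Reals_cnj_iff complex_is_Real_iff)
  qed
  have rbnd: "Re (r n) \<le> (norm x)\<^sup>2" for n
  proof -
    have "Re (r n) \<le> cmod (r n)" by (rule complex_Re_le_cmod)
    also have "\<dots> \<le> norm x * norm ((C ^^ n) x)" unfolding r_def by (rule cauchy_schwarz)
    also have "\<dots> \<le> norm x * norm x" by (intro mult_left_mono pow_norm) simp
    finally show ?thesis by (simp add: power2_eq_square)
  qed
  have r0: "Re (r 0) = (norm x)\<^sup>2" unfolding r_def by (simp add: Re_cinner_self)
  have "(\<lambda>n. Im (complex_of_real (sqc n) * r n)) sums Im (cinner x (Dop x))" by (rule sums_Im[OF rs])
  then have "(\<lambda>n. 0) sums Im (cinner x (Dop x))" by (simp add: rIm)
  then have im: "Im (cinner x (Dop x)) = 0" using sums_zero sums_unique2 by blast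
  have "(\<lambda>n. Re (complex_of_real (sqc n) * r n)) sums Re (cinner x (Dop x))" by (rule sums_Re[OF rs])
  then have re: "(\<lambda>n. sqc n * Re (r n)) sums Re (cinner x (Dop x))" by simp
  have trm: "sqc n * (norm x)\<^sup>2 \<le> sqc n * Re (r n)" for n
  proof (cases "n = 0")
    case True then show ?thesis by (simp add: r0)
  next
    case False
    then have "sqc n \<le> 0" by (intro sqc_nonpos) simp
    then show ?thesis using rbnd[of n] by (simp add: mult_left_mono_neg)
  qed
  have part: "0 \<le> (\<Sum>n<N. sqc n * Re (r n))" for N
  proof (cases N)
    case 0 then show ?thesis by simp
  next
    case (Suc M)
    have "0 \<le> (\<Sum>n\<le>M. sqc n) * (norm x)\<^sup>2" using sqc_partial_nonneg[of M] by simp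
    also have "\<dots> = (\<Sum>n<N. sqc n * (norm x)\<^sup>2)" using Suc by (simp add: sum_distrib_right lessThan_Suc_atMost)
    also have "\<dots> \<le> (\<Sum>n<N. sqc n * Re (r n))" by (intro sum_mono trm)
    finally show ?thesis .
  qed
  have "0 \<le> Re (cinner x (Dop x))"
    using re unfolding sums_def by (rule LIMSEQ_le_const) (use part in blast)
  then show ?thesis using im by simp
qed

lemma D_comm:
  assumes R: "bounded_op R" and RC: "\<And>x. R (C x) = C (R x)"
  shows "R (Dop x) = Dop (R x)"
proof -
  have "(\<lambda>n. R (sqc n *\<^sub>R (C ^^ n) x)) sums R (Dop x)"
    by (rule bounded_linear.sums[OF bounded_op_linear[OF R] D_sums])
  moreover have "(\<lambda>n. R (sqc n *\<^sub>R (C ^^ n) x)) = (\<lambda>n. sqc n *\<^sub>R (C ^^ n) (R x))"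
    by (simp add: scaleR_cscale bounded_op_cscale[OF R] pow_comm[OF R RC])
  ultimately show ?thesis using D_sums[of "R x"] by (simp add: sums_unique2)
qed

end


lemma pos_sa:
  assumes R: "bounded_op R" and im: "\<And>x. Im (cinner x (R x)) = 0"
  shows "cinner (R x) y = cinner x (R y)"
proof -
  define h where "h u v = cinner u (R v) - cinner (R u) v" for u v
  have hvv: "h v v = 0" for v
  proof -
    have "cinner (R v) v = cnj (cinner v (R v))" by (rule cinner_commute)
    also have "\<dots> = cinner v (R v)" using im[of v] by (metis Reals_cnj_iff complex_is_Real_iff)
    finally show ?thesis unfolding h_def by simp
  qed
  have e1: "h (x + y) (x + y) = h x x + h x y + h y x + h y y"
    unfolding h_def by (simp add: cinner_add_left cinner_add_right bounded_op_add[OF R] algebra_simps)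
  have e2: "h (x + cscale \<i> y) (x + cscale \<i> y) = h x x + \<i> * h x y - \<i> * h y x + h y y"
    unfolding h_def
    by (simp add: cinner_add_left cinner_add_right bounded_op_add[OF R] bounded_op_cscale[OF R]
        cinner_cscale_left cinner_cscale_right algebra_simps)
  have a: "h x y + h y x = 0" using e1 hvv[of x] hvv[of y] hvv[of "x + y"] by simp
  have b: "\<i> * (h x y - h y x) = 0" using e2 hvv[of x] hvv[of y] hvv[of "x + cscale \<i> y"]
    by (simp add: algebra_simps)
  then have "h x y = h y x" by simp
  with a have "h x y = 0" by simp
  then show ?thesis unfolding h_def by simp
qed

lemma pos_kernel:
  assumes R: "bounded_op R" and pos: "\<And>x. Im (cinner x (R x)) = 0 \<and> 0 \<le> Re (cinner x (R x))"
    and w: "cinner w (R w) = 0"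
  shows "R w = 0"
proof -
  have sa: "cinner (R u) v = cinner u (R v)" for u v
    using pos_sa[OF R] pos by blast
  have re0: "Re (cinner v (R w)) = 0" for v
  proof -
    have "- Re (cinner v (R w)) = 0"
    proof (rule quad_zero[of "Re (cinner v (R v))"])
      show "0 \<le> Re (cinner v (R v))" using pos by blast
      fix t :: real
      have "0 \<le> Re (cinner (w + t *\<^sub>R v) (R (w + t *\<^sub>R v)))" using pos by blast
      also have "Re (cinner (w + t *\<^sub>R v) (R (w + t *\<^sub>R v)))
          = Re (cinner w (R w)) + t * Re (cinner w (R v)) + t * Re (cinner v (R w)) + t\<^sup>2 * Re (cinner v (R v))"
        by (simp add: bounded_op_add[OF R] scaleR_cscale bounded_op_cscale[OF R] cinner_add_left cinner_add_right
            cinner_cscale_left cinner_cscale_right power2_eq_square algebra_simps)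
      also have "Re (cinner w (R v)) = Re (cinner v (R w))"
      proof -
        have "cinner w (R v) = cinner (R w) v" by (rule sa[symmetric])
        also have "\<dots> = cnj (cinner v (R w))" by (rule cinner_commute)
        finally show ?thesis by simp
      qed
      finally show "0 \<le> t\<^sup>2 * Re (cinner v (R v)) - 2 * t * - Re (cinner v (R w))"
        using w by simp
    qed
    then show ?thesis by simp
  qed
  have "(norm (R w))\<^sup>2 = Re (cinner (R w) (R w))" by (simp add: Re_cinner_self)
  also have "\<dots> = 0" by (rule re0)
  finally show ?thesis by simp
qed

lemma adj_norm:
  assumes P: "bounded_op P" and Pn: "\<And>x. norm (P x) \<le> norm x"
  shows "norm (adj P y) \<le> norm y"
proof -
  have "(norm (adj P y))\<^sup>2 = Re (cinner (adj P y) (adj P y))" by (simp add: Re_cinner_self)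
  also have "\<dots> = Re (cinner y (P (adj P y)))" by (simp add: adj(2)[OF P])
  also have "\<dots> \<le> cmod (cinner y (P (adj P y)))" by (rule complex_Re_le_cmod)
  also have "\<dots> \<le> norm y * norm (P (adj P y))" by (rule cauchy_schwarz)
  also have "\<dots> \<le> norm y * norm (adj P y)" by (intro mult_left_mono Pn) simp
  finally have "norm (adj P y) * norm (adj P y) \<le> norm y * norm (adj P y)" by (simp add: power2_eq_square)
  then show ?thesis by (cases "norm (adj P y) = 0") (auto simp: mult_le_cancel_right)
qed

lemma sacontr_PP:
  assumes P: "bounded_op P" and Pn: "\<And>x. norm (P x) \<le> norm x"
  shows "sacontr (\<lambda>x. adj P (P x))"
proof
  show "bounded_op (\<lambda>x. adj P (P x))" by (rule bounded_op_compose[OF adj(1)[OF P] P])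
  fix x y
  have "cinner (adj P (P x)) y = cinner (P x) (P y)" by (rule adj(2)[OF P])
  also have "\<dots> = cinner x (adj P (P y))" by (rule adj_right[OF P, symmetric])
  finally show "cinner (adj P (P x)) y = cinner x (adj P (P y))" .
  have "norm (adj P (P x)) \<le> norm (P x)" by (rule adj_norm[OF P Pn])
  also have "\<dots> \<le> norm x" by (rule Pn)
  finally show "norm (adj P (P x)) \<le> norm x" .
qed

context sacontr begin

lemma D_sa: "cinner (Dop x) y = cinner x (Dop y)"
  using pos_sa[OF D_bounded] D_pos by blast

lemma sqrt_unique:
  assumes R: "bounded_op R" and Rpos: "positive_op R" and RR: "R \<circ> R = (\<lambda>x. x - C x)"
  shows "R = Dop"
proof
  fix v
  have pos: "Im (cinner x (R x)) = 0 \<and> 0 \<le> Re (cinner x (R x))" for x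
    using Rpos unfolding positive_op_def op_le_def by simp
  have RRx: "R (R x) = x - C x" for x using fun_cong[OF RR, of x] by simp
  have RC: "R (C x) = C (R x)" for x
  proof -
    have "R (R (R x)) = R x - C (R x)" by (rule RRx)
    moreover have "R (R (R x)) = R x - R (C x)" by (simp add: RRx bounded_op_diff[OF R])
    ultimately show ?thesis by simp
  qed
  have RD: "R (Dop x) = Dop (R x)" for x by (rule D_comm[OF R RC])
  have Rsa: "cinner (R u) w = cinner u (R w)" for u w using pos_sa[OF R] pos by blast
  define w where "w = R v - Dop v"
  have sum0: "R w + Dop w = 0"
    unfolding w_def by (simp add: bounded_op_diff[OF R] bounded_op_diff[OF D_bounded] RRx DD RD)
  have "cinner w (R w) + cinner w (Dop w) = 0"
    using sum0 by (simp add: cinner_add_right[symmetric])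
  moreover have "Im (cinner w (R w)) = 0" "0 \<le> Re (cinner w (R w))" using pos by auto
  moreover have "Im (cinner w (Dop w)) = 0" "0 \<le> Re (cinner w (Dop w))" using D_pos by auto
  ultimately have "cinner w (R w) = 0" "cinner w (Dop w) = 0"
    by (auto simp: complex_eq_iff)
  then have Rw: "R w = 0" and Dw: "Dop w = 0"
    using pos_kernel[OF R pos] pos_kernel[OF D_bounded D_pos] by auto
  have "cinner w w = cinner (R v) w - cinner (Dop v) w" unfolding w_def by (rule cinner_diff_left)
  also have "\<dots> = cinner v (R w) - cinner v (Dop w)" by (simp add: Rsa D_sa)
  also have "\<dots> = 0" by (simp add: Rw Dw)
  finally have "w = 0" by simp
  then show "R v = Dop v" unfolding w_def by simp
qed

lemma op_sqrt_eq: "op_sqrt (\<lambda>x. x - C x) = Dop"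
  unfolding op_sqrt_def
proof (rule the_equality)
  show "bounded_op Dop \<and> positive_op Dop \<and> Dop \<circ> Dop = (\<lambda>x. x - C x)"
    using D_bounded D_pos by (auto simp: positive_op_def op_le_def DD)
  fix R assume "bounded_op R \<and> positive_op R \<and> R \<circ> R = (\<lambda>x. x - C x)"
  then show "R = Dop" using sqrt_unique by blast
qed

end


lemma real_cinner_sa:
  assumes "\<And>x y. cinner (T x) y = cinner x (T y)"
  shows "Im (cinner x (T x)) = 0"
proof -
  have "cinner x (T x) = cinner (T x) x" by (rule assms[symmetric])
  also have "\<dots> = cnj (cinner x (T x))" by (rule cinner_commute)
  finally show ?thesis by (metis Reals_cnj_iff complex_is_Real_iff)
qed

locale pcon =
  fixes A S P :: "'a::chilbert \<Rightarrow> 'a"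
  assumes PC: "P_contraction A S P"
begin

definition Tm where "Tm = (\<lambda>x. x - adj A (A x) - cscale (1/4) (adj S (S x)))"
definition Dm where "Dm = defect_op P"
definition Mm where "Mm = defect_space P"

lemma Ab: "bounded_op A" and Sb: "bounded_op S" and Pb: "bounded_op P"
  using P_contraction_bounded[OF PC] by auto

lemma Pn: "norm (P x) \<le> norm x"
  by (rule P_contraction_norm[OF PC])

lemma sac: "sacontr (\<lambda>x. adj P (P x))"
  by (rule sacontr_PP[OF Pb Pn])

lemma D_eq: "Dm = sacontr.Dop (\<lambda>x. adj P (P x))"
  unfolding Dm_def defect_op_def using sacontr.op_sqrt_eq[OF sac] by simp

lemma Db: "bounded_op Dm"
  unfolding D_eq by (rule sacontr.D_bounded[OF sac])

lemma Dsa: "cinner (Dm x) y = cinner x (Dm y)"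
  unfolding D_eq by (rule sacontr.D_sa[OF sac])

lemma DDsq: "cinner x (Dm (Dm x)) = complex_of_real ((norm (Dm x))\<^sup>2)"
  by (simp add: Dsa[symmetric] cinner_self)

lemma Mm_eq: "Mm = closure (range Dm)"
  unfolding Mm_def Dm_def defect_space_def ..

lemma range_csub: "csubspace (range Dm)"
  unfolding csubspace_def
proof (intro conjI ballI allI)
  show "0 \<in> range Dm" using bounded_op_zero[OF Db] by (metis rangeI)
next
  fix u v assume "u \<in> range Dm" "v \<in> range Dm"
  then obtain x y where "u = Dm x" "v = Dm y" by blast
  then have "u + v = Dm (x + y)" by (simp add: bounded_op_add[OF Db])
  then show "u + v \<in> range Dm" by simp
next
  fix c u assume "u \<in> range Dm"
  then obtain x where "u = Dm x" by blast
  then have "cscale c u = Dm (cscale c x)" by (simp add: bounded_op_cscale[OF Db])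
  then show "cscale c u \<in> range Dm" by simp
qed

lemma Mcsub: "csubspace Mm"
  unfolding Mm_eq by (rule csubspace_closure[OF range_csub])

lemma DinM: "Dm x \<in> Mm"
  unfolding Mm_eq by (rule subsetD[OF closure_subset]) simp

lemma M_orth_zero:
  assumes z: "z \<in> Mm" and o: "\<And>y. cinner z (Dm y) = 0"
  shows "z = 0"
proof -
  have "closure (range Dm) \<subseteq> {y. cinner z y = 0}"
  proof (rule closure_minimal)
    show "range Dm \<subseteq> {y. cinner z y = 0}" using o by auto
    show "closed {y. cinner z y = 0}"
    proof (rule closed_Collect_eq)
      show "continuous_on UNIV (cinner z)"
        by (rule bounded_linear.continuous_on[OF bounded_bilinear.bounded_linear_right[OF bounded_bilinear_cinner]]) (rule continuous_on_id)
    qed simp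
  qed
  then have "cinner z z = 0" using z unfolding Mm_eq by blast
  then show ?thesis by simp
qed

lemma M_ker_zero:
  assumes z: "z \<in> Mm" and Dz: "Dm z = 0"
  shows "z = 0"
  using M_orth_zero[OF z] Dz by (simp add: Dsa[symmetric])

lemma Tb: "bounded_op Tm"
proof -
  have a: "bounded_op (\<lambda>x. adj A (A x))" by (rule bounded_op_compose[OF adj(1)[OF Ab] Ab])
  have s: "bounded_op (\<lambda>x. cscale (1/4) (adj S (S x)))"
    by (rule bounded_op_scale[OF bounded_op_compose[OF adj(1)[OF Sb] Sb]])
  have "bounded_op (\<lambda>x. x - adj A (A x))" by (rule bounded_op_minus_op[OF bounded_op_id a])
  then show ?thesis unfolding Tm_def by (rule bounded_op_minus_op[OF _ s])
qed

lemma Tsa: "cinner (Tm x) y = cinner x (Tm y)"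
proof -
  have a: "cinner (adj A (A x)) y = cinner x (adj A (A y))"
  proof -
    have "cinner (adj A (A x)) y = cinner (A x) (A y)" by (rule adj(2)[OF Ab])
    also have "\<dots> = cinner x (adj A (A y))" by (rule adj_right[OF Ab, symmetric])
    finally show ?thesis .
  qed
  have s: "cinner (adj S (S x)) y = cinner x (adj S (S y))"
  proof -
    have "cinner (adj S (S x)) y = cinner (S x) (S y)" by (rule adj(2)[OF Sb])
    also have "\<dots> = cinner x (adj S (S y))" by (rule adj_right[OF Sb, symmetric])
    finally show ?thesis .
  qed
  have c: "cnj (1/4 :: complex) = 1/4" by simp
  show ?thesis unfolding Tm_def
    by (simp only: cinner_diff_left cinner_diff_right cinner_cscale_left cinner_cscale_right a s c)
qed

lemma TIm: "Im (cinner x (Tm x)) = 0"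
  by (rule real_cinner_sa[OF Tsa])

end


lemma bop_on_in: "bounded_op_on M X \<Longrightarrow> x \<in> M \<Longrightarrow> X x \<in> M"
  by (simp add: bounded_op_on_def)

lemma bop_on_add: "bounded_op_on M X \<Longrightarrow> x \<in> M \<Longrightarrow> y \<in> M \<Longrightarrow> X (x + y) = X x + X y"
  by (simp add: bounded_op_on_def)

lemma bop_on_scale: "bounded_op_on M X \<Longrightarrow> x \<in> M \<Longrightarrow> X (cscale c x) = cscale c (X x)"
  by (simp add: bounded_op_on_def)

lemma bop_on_bound:
  assumes "bounded_op_on M X"
  obtains K where "K \<ge> 0" "\<And>x. x \<in> M \<Longrightarrow> norm (X x) \<le> K * norm x"
proof -
  from assms obtain K where K: "\<And>x. x \<in> M \<Longrightarrow> norm (X x) \<le> K * norm x"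
    unfolding bounded_op_on_def by blast
  have "norm (X x) \<le> max K 0 * norm x" if "x \<in> M" for x
    using K[OF that] by (meson max.cobounded1 mult_right_mono norm_ge_zero order_trans)
  then show ?thesis using that[of "max K 0"] by simp
qed

lemma bop_on_diff:
  assumes X: "bounded_op_on M X" and M: "csubspace M" and x: "x \<in> M" and y: "y \<in> M"
  shows "X (x - y) = X x - X y"
proof -
  have "X ((x - y) + y) = X (x - y) + X y" by (rule bop_on_add[OF X csubspace_diff[OF M x y] y])
  then show ?thesis by simp
qed

lemma bop_on_zero:
  assumes X: "bounded_op_on M X" and M: "csubspace M"
  shows "X 0 = 0"
  using bop_on_diff[OF X M csubspace_0[OF M] csubspace_0[OF M]] by simp

lemma numrad_bound:
  assumes X: "bounded_op_on M X" and M: "csubspace M" and nr: "numerical_radius M X \<le> 1"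
    and u: "u \<in> M"
  shows "cmod (cinner u (X u)) \<le> (norm u)\<^sup>2"
proof (cases "u = 0")
  case True then show ?thesis by simp
next
  case False
  obtain K where K: "K \<ge> 0" "\<And>x. x \<in> M \<Longrightarrow> norm (X x) \<le> K * norm x"
    using bop_on_bound[OF X] by blast
  define n where "n = norm u"
  have n0: "n > 0" using False unfolding n_def by simp
  define u' where "u' = cscale (complex_of_real (1/n)) u"
  have u'M: "u' \<in> M" unfolding u'_def by (rule csubspace_cscale[OF M u])
  have nu': "norm u' = 1" unfolding u'_def norm_cscale norm_of_real using n0 by (simp add: n_def)
  have eq: "cinner u' (X u') = complex_of_real (1 / n\<^sup>2) * cinner u (X u)"
    unfolding u'_def using bop_on_scale[OF X u]
    by (simp add: cinner_cscale_left cinner_cscale_right power2_eq_square)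
  have bdd: "bdd_above (insert 0 {cmod (cinner x (X x)) | x. x \<in> M \<and> norm x = 1})"
  proof (rule bdd_aboveI[where M=K])
    fix y assume "y \<in> insert 0 {cmod (cinner x (X x)) | x. x \<in> M \<and> norm x = 1}"
    then consider "y = 0" | x where "y = cmod (cinner x (X x))" "x \<in> M" "norm x = 1" by blast
    then show "y \<le> K"
    proof cases
      case 1 then show ?thesis using K by simp
    next
      case 2
      have "y \<le> norm x * norm (X x)" using 2 cauchy_schwarz[of x "X x"] by simp
      also have "\<dots> \<le> 1 * (K * 1)" using K(2)[OF 2(2)] 2(3) by simp
      finally show ?thesis by simp
    qed
  qed
  have "cmod (cinner u' (X u')) \<le> numerical_radius M X"
    unfolding numerical_radius_def using u'M nu' by (intro cSup_upper[OF _ bdd]) blast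
  also have "\<dots> \<le> 1" by (rule nr)
  finally have "cmod (cinner u (X u)) / n\<^sup>2 \<le> 1" by (simp add: eq norm_mult norm_divide norm_power)
  then show ?thesis using n0 by (simp add: n_def field_simps)
qed

lemma amgm_bound:
  fixes r a b :: real
  assumes h: "\<And>s. s > 0 \<Longrightarrow> 2 * r \<le> s * a\<^sup>2 + b\<^sup>2 / s" and a: "a \<ge> 0" and b: "b \<ge> 0"
  shows "r \<le> a * b"
proof (cases "a > 0 \<and> b > 0")
  case True
  have "2 * r \<le> (b / a) * a\<^sup>2 + b\<^sup>2 / (b / a)" using True by (intro h) simp
  also have "\<dots> = 2 * (a * b)" using True by (simp add: power2_eq_square field_simps)
  finally show ?thesis by simp
next
  case False
  then have ab: "a * b = 0" using a b by auto
  have "2 * r \<le> 0"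
  proof (rule field_le_epsilon)
    fix e :: real assume e: "e > 0"
    show "2 * r \<le> 0 + e"
    proof (cases "a = 0")
      case True
      have "2 * r \<le> ((b\<^sup>2 + 1) / e) * a\<^sup>2 + b\<^sup>2 / ((b\<^sup>2 + 1) / e)"
      proof (rule h)
        have "b\<^sup>2 + 1 > 0" using zero_le_power2[of b] by linarith
        then show "(b\<^sup>2 + 1) / e > 0" using e by simp
      qed
      also have "\<dots> = b\<^sup>2 * e / (b\<^sup>2 + 1)" using True e by (simp add: field_simps)
      also have "\<dots> \<le> e"
      proof -
        have p: "b\<^sup>2 + 1 > 0" using zero_le_power2[of b] by linarith
        have "b\<^sup>2 * e \<le> (b\<^sup>2 + 1) * e" using e by (intro mult_right_mono) auto
        then show ?thesis using p by (simp add: divide_le_eq mult.commute)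
      qed
      finally show ?thesis by simp
    next
      case False
      then have b0: "b = 0" using \<open>\<not> (a > 0 \<and> b > 0)\<close> a b by auto
      have "2 * r \<le> (e / (a\<^sup>2 + 1)) * a\<^sup>2 + b\<^sup>2 / (e / (a\<^sup>2 + 1))"
      proof (rule h)
        have "a\<^sup>2 + 1 > 0" using zero_le_power2[of a] by linarith
        then show "e / (a\<^sup>2 + 1) > 0" using e by simp
      qed
      also have "\<dots> = e * a\<^sup>2 / (a\<^sup>2 + 1)" using b0 by simp
      also have "\<dots> \<le> e"
      proof -
        have p: "a\<^sup>2 + 1 > 0" using zero_le_power2[of a] by linarith
        have "a\<^sup>2 * e \<le> (a\<^sup>2 + 1) * e" using e by (intro mult_right_mono) auto
        then show ?thesis using p by (simp add: divide_le_eq mult.commute)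
      qed
      finally show ?thesis by simp
    qed
  qed
  then show ?thesis using ab by linarith
qed


context pcon begin

lemma inner_T_X:
  assumes "\<forall>x. Tm x = Dm (X (Dm x))"
  shows "cinner x (Tm x) = cinner (Dm x) (X (Dm x))"
proof -
  have "cinner x (Tm x) = cinner x (Dm (X (Dm x)))" using assms by simp
  also have "\<dots> = cinner (Dm x) (X (Dm x))" by (rule Dsa[symmetric])
  finally show ?thesis .
qed

lemma part1_fwd:
  assumes X: "bounded_op_on Mm X" and nr: "numerical_radius Mm X \<le> 1"
    and TX: "\<forall>x. Tm x = Dm (X (Dm x))"
  shows "op_le (\<lambda>x. - Tm x) (Dm \<circ> Dm) \<and> op_le Tm (Dm \<circ> Dm)"
proof -
  have bnd: "cmod (cinner x (Tm x)) \<le> (norm (Dm x))\<^sup>2" for x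
    unfolding inner_T_X[OF TX] by (rule numrad_bound[OF X Mcsub nr DinM])
  have re: "- cmod (cinner x (Tm x)) \<le> Re (cinner x (Tm x))" "Re (cinner x (Tm x)) \<le> cmod (cinner x (Tm x))" for x
    using abs_Re_le_cmod[of "cinner x (Tm x)"] by auto
  show ?thesis
    unfolding op_le_def
  proof (intro conjI allI)
    fix x
    have e: "cinner x ((Dm \<circ> Dm) x - - Tm x) = complex_of_real ((norm (Dm x))\<^sup>2) + cinner x (Tm x)"
      by (simp add: cinner_add_right DDsq)
    show "Im (cinner x ((Dm \<circ> Dm) x - - Tm x)) = 0" unfolding e using TIm[of x] by simp
    show "0 \<le> Re (cinner x ((Dm \<circ> Dm) x - - Tm x))" unfolding e using bnd[of x] re[of x] by simp
  next
    fix x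
    have e: "cinner x ((Dm \<circ> Dm) x - Tm x) = complex_of_real ((norm (Dm x))\<^sup>2) - cinner x (Tm x)"
      by (simp add: cinner_diff_right DDsq)
    show "Im (cinner x ((Dm \<circ> Dm) x - Tm x)) = 0" unfolding e using TIm[of x] by simp
    show "0 \<le> Re (cinner x ((Dm \<circ> Dm) x - Tm x))" unfolding e using bnd[of x] re[of x] by simp
  qed
qed

lemma key_bound:
  assumes h1: "op_le (\<lambda>x. - Tm x) (Dm \<circ> Dm)" and h2: "op_le Tm (Dm \<circ> Dm)"
  shows "cmod (cinner y (Tm x)) \<le> norm (Dm y) * norm (Dm x)"
proof -
  define q where "q v = Re (cinner v (Tm v))" for v
  have q1: "- q v \<le> (norm (Dm v))\<^sup>2" for v
  proof -
    have "0 \<le> Re (cinner v ((Dm \<circ> Dm) v - - Tm v))" using h1 unfolding op_le_def by blast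
    also have "cinner v ((Dm \<circ> Dm) v - - Tm v) = complex_of_real ((norm (Dm v))\<^sup>2) + cinner v (Tm v)"
      by (simp add: cinner_add_right DDsq)
    finally show ?thesis unfolding q_def by simp
  qed
  have q2: "q v \<le> (norm (Dm v))\<^sup>2" for v
  proof -
    have "0 \<le> Re (cinner v ((Dm \<circ> Dm) v - Tm v))" using h2 unfolding op_le_def by blast
    also have "cinner v ((Dm \<circ> Dm) v - Tm v) = complex_of_real ((norm (Dm v))\<^sup>2) - cinner v (Tm v)"
      by (simp add: cinner_diff_right DDsq)
    finally show ?thesis unfolding q_def by simp
  qed
  have R1: "Re (cinner y (Tm x)) \<le> ((norm (Dm y))\<^sup>2 + (norm (Dm x))\<^sup>2) / 2" for x y
  proof -
    have sym: "Re (cinner x (Tm y)) = Re (cinner y (Tm x))"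
    proof -
      have "cinner x (Tm y) = cinner (Tm x) y" by (rule Tsa[symmetric])
      also have "\<dots> = cnj (cinner y (Tm x))" by (rule cinner_commute)
      finally show ?thesis by simp
    qed
    have "q (y + x) - q (y - x) = 2 * Re (cinner y (Tm x)) + 2 * Re (cinner x (Tm y))"
      unfolding q_def
      by (simp add: bounded_op_add[OF Tb] bounded_op_diff[OF Tb] cinner_add_left cinner_add_right
          cinner_diff_left cinner_diff_right)
    then have "4 * Re (cinner y (Tm x)) = q (y + x) - q (y - x)" using sym by simp
    also have "\<dots> \<le> (norm (Dm (y + x)))\<^sup>2 + (norm (Dm (y - x)))\<^sup>2" using q1 q2 by (smt (verit))
    also have "\<dots> = 2 * (norm (Dm y))\<^sup>2 + 2 * (norm (Dm x))\<^sup>2"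
      by (simp add: bounded_op_add[OF Db] bounded_op_diff[OF Db] parallelogram)
    finally show ?thesis by simp
  qed
  have R2: "Re (cinner y (Tm x)) \<le> norm (Dm y) * norm (Dm x)" for x y
  proof (rule amgm_bound)
    fix s :: real assume s: "s > 0"
    define t where "t = sqrt s"
    have t: "t > 0" "t * t = s" using s unfolding t_def by (auto simp: real_sqrt_mult[symmetric])
    have "Re (cinner (t *\<^sub>R y) (Tm ((1 / t) *\<^sub>R x))) \<le> ((norm (Dm (t *\<^sub>R y)))\<^sup>2 + (norm (Dm ((1 / t) *\<^sub>R x)))\<^sup>2) / 2"
      by (rule R1)
    moreover have "Re (cinner (t *\<^sub>R y) (Tm ((1 / t) *\<^sub>R x))) = Re (cinner y (Tm x))"
      using t by (simp add: scaleR_cscale bounded_op_cscale[OF Tb] cinner_cscale_left cinner_cscale_right)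
    moreover have "(norm (Dm (t *\<^sub>R y)))\<^sup>2 = s * (norm (Dm y))\<^sup>2"
      using t by (simp add: scaleR_cscale bounded_op_cscale[OF Db] norm_cscale power_mult_distrib power2_eq_square)
    moreover have "(norm (Dm ((1 / t) *\<^sub>R x)))\<^sup>2 = (norm (Dm x))\<^sup>2 / s"
    proof -
      have "(norm (Dm ((1 / t) *\<^sub>R x)))\<^sup>2 = (1 / t)\<^sup>2 * (norm (Dm x))\<^sup>2"
      proof -
        have "Dm ((1 / t) *\<^sub>R x) = (1 / t) *\<^sub>R Dm x" by (simp only: scaleR_cscale bounded_op_cscale[OF Db])
        then show ?thesis using t by (simp add: power_mult_distrib power_divide)
      qed
      also have "(1 / t)\<^sup>2 = 1 / s" using t by (simp add: power2_eq_square)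
      finally show ?thesis by simp
    qed
    ultimately show "2 * Re (cinner y (Tm x)) \<le> s * (norm (Dm y))\<^sup>2 + (norm (Dm x))\<^sup>2 / s"
      by simp
  qed simp_all
  show ?thesis
  proof (cases "cinner y (Tm x) = 0")
    case True then show ?thesis by simp
  next
    case False
    define w where "w = cinner y (Tm x)"
    define c where "c = w / complex_of_real (cmod w)"
    have w0: "cmod w > 0" using False unfolding w_def by simp
    have c1: "cmod c = 1" unfolding c_def using w0 by (simp add: norm_divide)
    have "cinner (cscale c y) (Tm x) = cnj c * w" unfolding w_def by (rule cinner_cscale_left)
    also have "cnj c * w = complex_of_real (cmod w)"
      unfolding c_def using w0 complex_norm_square[of w]
      by (simp add: field_simps power2_eq_square)
    finally have "cmod w = Re (cinner (cscale c y) (Tm x))" by simp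
    also have "\<dots> \<le> norm (Dm (cscale c y)) * norm (Dm x)" by (rule R2)
    also have "norm (Dm (cscale c y)) = norm (Dm y)"
      by (simp add: bounded_op_cscale[OF Db] norm_cscale c1)
    finally show ?thesis unfolding w_def .
  qed
qed

end


context pcon begin

lemma cmod_swap: "cmod (cinner a b) = cmod (cinner b a)"
  by (subst cinner_commute) simp

lemma Z_exists:
  assumes KB: "\<And>x y. cmod (cinner y (Tm x)) \<le> norm (Dm y) * norm (Dm x)"
  shows "\<exists>z. z \<in> Mm \<and> Dm z = Tm x \<and> norm z \<le> norm (Dm x)"
proof -
  define g where "g v = cinner (Tm x) (SOME y. Dm y = v)" for v
  have G: "g (Dm y) = cinner (Tm x) y" for y
  proof -
    define y' where "y' = (SOME y'. Dm y' = Dm y)"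
    have y': "Dm y' = Dm y" unfolding y'_def by (rule someI[of "\<lambda>y'. Dm y' = Dm y" y]) simp
    have "cmod (cinner (Tm x) (y' - y)) = cmod (cinner (y' - y) (Tm x))" by (rule cmod_swap)
    also have "\<dots> \<le> norm (Dm (y' - y)) * norm (Dm x)" by (rule KB)
    also have "Dm (y' - y) = 0" using y' by (simp add: bounded_op_diff[OF Db])
    finally have "cinner (Tm x) (y' - y) = 0" by simp
    then show ?thesis unfolding g_def y'_def[symmetric] by (simp add: cinner_diff_right)
  qed
  have "\<exists>z\<in>closure (range Dm). (\<forall>v\<in>range Dm. g v = cinner z v) \<and> norm z \<le> norm (Dm x)"
  proof (rule riesz_dense[OF range_csub])
    fix u v assume "u \<in> range Dm" "v \<in> range Dm"
    then obtain a b where ab: "u = Dm a" "v = Dm b" by blast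
    have "g (u + v) = g (Dm (a + b))" unfolding ab by (simp add: bounded_op_add[OF Db])
    then show "g (u + v) = g u + g v" unfolding ab G by (simp add: cinner_add_right)
  next
    fix c u assume "u \<in> range Dm"
    then obtain a where a: "u = Dm a" by blast
    have "g (cscale c u) = g (Dm (cscale c a))" unfolding a by (simp add: bounded_op_cscale[OF Db])
    then show "g (cscale c u) = c * g u" unfolding a G by (simp add: cinner_cscale_right)
  next
    fix u assume "u \<in> range Dm"
    then obtain a where a: "u = Dm a" by blast
    have "cmod (g u) = cmod (cinner a (Tm x))" unfolding a G by (rule cmod_swap)
    also have "\<dots> \<le> norm (Dm x) * norm u" unfolding a using KB[where x=x and y=a] by (simp add: mult.commute)
    finally show "cmod (g u) \<le> norm (Dm x) * norm u" .
  qed simp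
  then obtain z where z: "z \<in> Mm" "\<And>v. v \<in> range Dm \<Longrightarrow> g v = cinner z v" "norm z \<le> norm (Dm x)"
    unfolding Mm_eq by blast
  have "Dm z = Tm x"
  proof (rule cinner_ext)
    fix y
    have "cinner (Dm z) y = cinner z (Dm y)" by (rule Dsa)
    also have "\<dots> = g (Dm y)" using z(2)[of "Dm y"] by simp
    also have "\<dots> = cinner (Tm x) y" by (rule G)
    finally show "cinner (Dm z) y = cinner (Tm x) y" .
  qed
  then show ?thesis using z by blast
qed

lemma part1_bwd:
  assumes h1: "op_le (\<lambda>x. - Tm x) (Dm \<circ> Dm)" and h2: "op_le Tm (Dm \<circ> Dm)"
  shows "\<exists>X. bounded_op_on Mm X \<and> numerical_radius Mm X \<le> 1 \<and> (\<forall>x. Tm x = Dm (X (Dm x)))"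
proof -
  have KB: "cmod (cinner y (Tm x)) \<le> norm (Dm y) * norm (Dm x)" for x y
    by (rule key_bound[OF h1 h2])
  define Z where "Z x = (SOME z. z \<in> Mm \<and> Dm z = Tm x \<and> norm z \<le> norm (Dm x))" for x
  have Zp: "Z x \<in> Mm \<and> Dm (Z x) = Tm x \<and> norm (Z x) \<le> norm (Dm x)" for x
    unfolding Z_def by (rule someI_ex[OF Z_exists[OF KB]])
  have ZM: "Z x \<in> Mm" and DZ: "Dm (Z x) = Tm x" and Zn: "norm (Z x) \<le> norm (Dm x)" for x
    using Zp by auto
  have Z_diff: "Z (x1 - x2) = Z x1 - Z x2" for x1 x2
  proof -
    have "Z (x1 - x2) - (Z x1 - Z x2) = 0"
    proof (rule M_ker_zero)
      show "Z (x1 - x2) - (Z x1 - Z x2) \<in> Mm" using ZM Mcsub by (meson csubspace_diff)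
      show "Dm (Z (x1 - x2) - (Z x1 - Z x2)) = 0" by (simp add: bounded_op_diff[OF Db] bounded_op_diff[OF Tb] DZ)
    qed
    then show ?thesis by simp
  qed
  have Z_add: "Z (x1 + x2) = Z x1 + Z x2" for x1 x2
  proof -
    have "Z (x1 + x2) - (Z x1 + Z x2) = 0"
    proof (rule M_ker_zero)
      show "Z (x1 + x2) - (Z x1 + Z x2) \<in> Mm" using ZM Mcsub by (meson csubspace_diff csubspace_add)
      show "Dm (Z (x1 + x2) - (Z x1 + Z x2)) = 0"
        by (simp add: bounded_op_diff[OF Db] bounded_op_add[OF Db] bounded_op_add[OF Tb] DZ)
    qed
    then show ?thesis by simp
  qed
  have Z_scale: "Z (cscale c x) = cscale c (Z x)" for c x
  proof -
    have "Z (cscale c x) - cscale c (Z x) = 0"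
    proof (rule M_ker_zero)
      show "Z (cscale c x) - cscale c (Z x) \<in> Mm" using ZM Mcsub by (meson csubspace_diff csubspace_cscale)
      show "Dm (Z (cscale c x) - cscale c (Z x)) = 0"
        by (simp add: bounded_op_diff[OF Db] bounded_op_cscale[OF Db] bounded_op_cscale[OF Tb] DZ)
    qed
    then show ?thesis by simp
  qed
  have Zwd: "Z y = Z y'" if "Dm y = Dm y'" for y y'
  proof -
    have "norm (Z (y - y')) \<le> norm (Dm (y - y'))" by (rule Zn)
    also have "Dm (y - y') = 0" using that by (simp add: bounded_op_diff[OF Db])
    finally have "Z (y - y') = 0" by simp
    then show ?thesis by (simp add: Z_diff)
  qed
  have X_exists: "\<exists>z. z \<in> Mm \<and> (\<forall>y. cinner z (Dm y) = cinner u (Z y)) \<and> norm z \<le> norm u" for u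
  proof -
    define f where "f v = cinner u (Z (SOME y. Dm y = v))" for v
    have F: "f (Dm y) = cinner u (Z y)" for y
    proof -
      have "Dm (SOME y'. Dm y' = Dm y) = Dm y" by (rule someI[of "\<lambda>y'. Dm y' = Dm y" y]) simp
      then have "Z (SOME y'. Dm y' = Dm y) = Z y" by (rule Zwd)
      then show ?thesis unfolding f_def by simp
    qed
    have "\<exists>z\<in>closure (range Dm). (\<forall>v\<in>range Dm. f v = cinner z v) \<and> norm z \<le> norm u"
    proof (rule riesz_dense[OF range_csub])
      fix v w assume "v \<in> range Dm" "w \<in> range Dm"
      then obtain a b where ab: "v = Dm a" "w = Dm b" by blast
      have "f (v + w) = f (Dm (a + b))" unfolding ab by (simp add: bounded_op_add[OF Db])
      then show "f (v + w) = f v + f w" unfolding ab F by (simp add: Z_add cinner_add_right)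
    next
      fix c v assume "v \<in> range Dm"
      then obtain a where a: "v = Dm a" by blast
      have "f (cscale c v) = f (Dm (cscale c a))" unfolding a by (simp add: bounded_op_cscale[OF Db])
      then show "f (cscale c v) = c * f v" unfolding a F by (simp add: Z_scale cinner_cscale_right)
    next
      fix v assume "v \<in> range Dm"
      then obtain a where a: "v = Dm a" by blast
      have "cmod (f v) = cmod (cinner u (Z a))" unfolding a F ..
      also have "\<dots> \<le> norm u * norm (Z a)" by (rule cauchy_schwarz)
      also have "\<dots> \<le> norm u * norm v" unfolding a by (intro mult_left_mono Zn) simp
      finally show "cmod (f v) \<le> norm u * norm v" .
    qed simp
    then obtain z where z: "z \<in> Mm" "\<And>v. v \<in> range Dm \<Longrightarrow> f v = cinner z v" "norm z \<le> norm u"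
      unfolding Mm_eq by blast
    have "cinner z (Dm y) = cinner u (Z y)" for y using z(2)[of "Dm y"] F[of y] by simp
    then show ?thesis using z by blast
  qed
  define X where "X u = (SOME z. z \<in> Mm \<and> (\<forall>y. cinner z (Dm y) = cinner u (Z y)) \<and> norm z \<le> norm u)" for u
  have Xp: "X u \<in> Mm \<and> (\<forall>y. cinner (X u) (Dm y) = cinner u (Z y)) \<and> norm (X u) \<le> norm u" for u
    unfolding X_def by (rule someI_ex[OF X_exists])
  have XM: "X u \<in> Mm" and XD: "cinner (X u) (Dm y) = cinner u (Z y)" and Xn: "norm (X u) \<le> norm u" for u y
    using Xp by auto
  have Xb: "bounded_op_on Mm X"
    unfolding bounded_op_on_def
  proof (intro conjI ballI allI exI[of _ 1])
    fix x show "X x \<in> Mm" by (rule XM)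
  next
    fix x y
    have "X (x + y) - (X x + X y) = 0"
    proof (rule M_orth_zero)
      show "X (x + y) - (X x + X y) \<in> Mm" using XM Mcsub by (meson csubspace_diff csubspace_add)
      fix w show "cinner (X (x + y) - (X x + X y)) (Dm w) = 0"
        by (simp add: cinner_diff_left cinner_add_left XD)
    qed
    then show "X (x + y) = X x + X y" by simp
  next
    fix c x
    have "X (cscale c x) - cscale c (X x) = 0"
    proof (rule M_orth_zero)
      show "X (cscale c x) - cscale c (X x) \<in> Mm" using XM Mcsub by (meson csubspace_diff csubspace_cscale)
      fix w show "cinner (X (cscale c x) - cscale c (X x)) (Dm w) = 0"
        by (simp add: cinner_diff_left cinner_cscale_left XD)
    qed
    then show "X (cscale c x) = cscale c (X x)" by simp
  next
    fix x show "norm (X x) \<le> 1 * norm x" using Xn by simp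
  qed
  have nr: "numerical_radius Mm X \<le> 1"
    unfolding numerical_radius_def
  proof (rule cSup_least)
    show "insert 0 {cmod (cinner x (X x)) |x. x \<in> Mm \<and> norm x = 1} \<noteq> {}" by simp
    fix y assume "y \<in> insert 0 {cmod (cinner x (X x)) |x. x \<in> Mm \<and> norm x = 1}"
    then consider "y = 0" | x where "y = cmod (cinner x (X x))" "norm x = 1" by blast
    then show "y \<le> 1"
    proof cases
      case 1 then show ?thesis by simp
    next
      case 2
      have "y \<le> norm x * norm (X x)" using 2 cauchy_schwarz[of x "X x"] by simp
      also have "\<dots> \<le> 1 * 1" using Xn[of x] 2(2) by simp
      finally show ?thesis by simp
    qed
  qed
  have TX: "Tm x = Dm (X (Dm x))" for x
  proof (rule cinner_ext)
    fix y
    have "cinner (Tm x) y = cinner x (Tm y)" by (rule Tsa)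
    also have "\<dots> = cinner x (Dm (Z y))" by (simp add: DZ)
    also have "\<dots> = cinner (Dm x) (Z y)" by (rule Dsa[symmetric])
    also have "\<dots> = cinner (X (Dm x)) (Dm y)" by (rule XD[symmetric])
    also have "\<dots> = cinner (Dm (X (Dm x))) y" by (rule Dsa[symmetric])
    finally show "cinner (Tm x) y = cinner (Dm (X (Dm x))) y" .
  qed
  show ?thesis using Xb nr TX by blast
qed

end


lemma quad_approx:
  assumes X: "bounded_op_on M X" and M: "csubspace M" and K: "K \<ge> 0"
    and XK: "\<And>x. x \<in> M \<Longrightarrow> norm (X x) \<le> K * norm x"
    and u: "u \<in> M" and v: "v \<in> M" and uv: "norm (u - v) \<le> 1"
  shows "cmod (cinner u (X u) - cinner v (X v)) \<le> norm (u - v) * (K * (2 * norm u + 1))"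
proof -
  have uvM: "u - v \<in> M" by (rule csubspace_diff[OF M u v])
  have "cinner u (X u) - cinner v (X v) = cinner (u - v) (X u) + cinner v (X (u - v))"
    by (simp add: bop_on_diff[OF X M u v] cinner_diff_left cinner_diff_right)
  then have "cmod (cinner u (X u) - cinner v (X v)) \<le> cmod (cinner (u - v) (X u)) + cmod (cinner v (X (u - v)))"
    by (simp add: norm_triangle_ineq)
  also have "cmod (cinner (u - v) (X u)) \<le> norm (u - v) * (K * norm u)"
  proof -
    have "cmod (cinner (u - v) (X u)) \<le> norm (u - v) * norm (X u)" by (rule cauchy_schwarz)
    also have "\<dots> \<le> norm (u - v) * (K * norm u)" by (intro mult_left_mono XK u) simp
    finally show ?thesis .
  qed
  also have "cmod (cinner v (X (u - v))) \<le> (norm u + 1) * (K * norm (u - v))"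
  proof -
    have nv: "norm v \<le> norm u + 1"
    proof -
      have "norm v = norm (u - (u - v))" by simp
      also have "\<dots> \<le> norm u + norm (u - v)" by (rule norm_triangle_ineq4)
      finally show ?thesis using uv by simp
    qed
    have "cmod (cinner v (X (u - v))) \<le> norm v * norm (X (u - v))" by (rule cauchy_schwarz)
    also have "\<dots> \<le> (norm u + 1) * (K * norm (u - v))"
      using nv XK[OF uvM] by (intro mult_mono) (auto simp: K)
    finally show ?thesis .
  qed
  also have "norm (u - v) * (K * norm u) + (norm u + 1) * (K * norm (u - v)) = norm (u - v) * (K * (2 * norm u + 1))"
    by (simp add: algebra_simps)
  finally show ?thesis by simp
qed

context pcon begin

lemma part2:
  assumes X: "bounded_op_on Mm X" "\<forall>x. Tm x = Dm (X (Dm x))"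
    and Y: "bounded_op_on Mm Y" "\<forall>x. Tm x = Dm (Y (Dm x))"
    and u: "u \<in> Mm"
  shows "X u = Y u"
proof -
  have onR: "X (Dm x) = Y (Dm x)" for x
  proof -
    have "X (Dm x) - Y (Dm x) = 0"
    proof (rule M_ker_zero)
      show "X (Dm x) - Y (Dm x) \<in> Mm"
        using bop_on_in[OF X(1) DinM] bop_on_in[OF Y(1) DinM] by (rule csubspace_diff[OF Mcsub])
      have "Dm (X (Dm x) - Y (Dm x)) = Dm (X (Dm x)) - Dm (Y (Dm x))" by (rule bounded_op_diff[OF Db])
      also have "\<dots> = 0"
      proof -
        have "Dm (X (Dm x)) = Tm x" using X(2) by simp
        moreover have "Dm (Y (Dm x)) = Tm x" using Y(2) by simp
        ultimately show ?thesis by simp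
      qed
      finally show "Dm (X (Dm x) - Y (Dm x)) = 0" .
    qed
    then show ?thesis by simp
  qed
  obtain KX where KX: "KX \<ge> 0" "\<And>x. x \<in> Mm \<Longrightarrow> norm (X x) \<le> KX * norm x" using bop_on_bound[OF X(1)] by blast
  obtain KY where KY: "KY \<ge> 0" "\<And>x. x \<in> Mm \<Longrightarrow> norm (Y x) \<le> KY * norm x" using bop_on_bound[OF Y(1)] by blast
  have "norm (X u - Y u) \<le> 0"
  proof (rule field_le_epsilon)
    fix e :: real assume e: "e > 0"
    define \<delta> where "\<delta> = e / (KX + KY + 1)"
    have \<delta>: "\<delta> > 0" unfolding \<delta>_def using e KX KY by simp
    from u \<delta> obtain x where x: "dist (Dm x) u < \<delta>" unfolding Mm_eq closure_approachable by blast
    define d where "d = u - Dm x"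
    have dM: "d \<in> Mm" unfolding d_def using Mcsub u DinM by (rule csubspace_diff)
    have nd: "norm d < \<delta>" using x unfolding d_def by (simp add: dist_norm norm_minus_commute)
    have ud: "u = d + Dm x" unfolding d_def by simp
    have "X u - Y u = X d - Y d"
      unfolding ud by (simp add: bop_on_add[OF X(1) dM DinM] bop_on_add[OF Y(1) dM DinM] onR)
    then have "norm (X u - Y u) \<le> norm (X d) + norm (Y d)" by (simp add: norm_triangle_ineq4)
    also have "\<dots> \<le> KX * norm d + KY * norm d" using KX(2)[OF dM] KY(2)[OF dM] by simp
    also have "\<dots> \<le> (KX + KY + 1) * norm d" by (simp add: algebra_simps)
    also have "\<dots> \<le> (KX + KY + 1) * \<delta>" using nd KX KY by (intro mult_left_mono) auto
    also have "\<dots> = e" unfolding \<delta>_def using KX KY by simp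
    finally show "norm (X u - Y u) \<le> 0 + e" by simp
  qed
  then show ?thesis by simp
qed

lemma part3:
  assumes X: "bounded_op_on Mm X" "\<forall>x. Tm x = Dm (X (Dm x))"
  shows "positive_on Mm X \<longleftrightarrow> op_le (\<lambda>x. adj A (A x) + cscale (1/4) (adj S (S x))) id"
proof -
  have e: "id x - (adj A (A x) + cscale (1/4) (adj S (S x))) = Tm x" for x
    unfolding Tm_def by (simp add: diff_diff_eq)
  have opeq: "op_le (\<lambda>x. adj A (A x) + cscale (1/4) (adj S (S x))) id \<longleftrightarrow>
      (\<forall>x. Im (cinner x (Tm x)) = 0 \<and> 0 \<le> Re (cinner x (Tm x)))"
    unfolding op_le_def e ..
  show ?thesis
    unfolding opeq inner_T_X[OF X(2)]
  proof
    assume "positive_on Mm X"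
    then show "\<forall>x. Im (cinner (Dm x) (X (Dm x))) = 0 \<and> 0 \<le> Re (cinner (Dm x) (X (Dm x)))"
      unfolding positive_on_def using DinM by blast
  next
    assume hv: "\<forall>x. Im (cinner (Dm x) (X (Dm x))) = 0 \<and> 0 \<le> Re (cinner (Dm x) (X (Dm x)))"
    obtain K where K: "K \<ge> 0" "\<And>x. x \<in> Mm \<Longrightarrow> norm (X x) \<le> K * norm x" using bop_on_bound[OF X(1)] by blast
    show "positive_on Mm X"
      unfolding positive_on_def
    proof (intro ballI)
      fix u assume u: "u \<in> Mm"
      define B where "B = K * (2 * norm u + 1) + 1"
      have B: "B > 0"
      proof -
        have "0 \<le> K * (2 * norm u + 1)" using K by simp
        then show ?thesis unfolding B_def by linarith
      qed
      have approx: "\<exists>x. cmod (cinner u (X u) - cinner (Dm x) (X (Dm x))) \<le> e" if e: "e > 0" for e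
      proof -
        define \<delta> where "\<delta> = min 1 (e / B)"
        have \<delta>: "\<delta> > 0" unfolding \<delta>_def using e B by simp
        from u \<delta> obtain x where x: "dist (Dm x) u < \<delta>" unfolding Mm_eq closure_approachable by blast
        have nd: "norm (u - Dm x) < \<delta>" using x by (simp add: dist_norm norm_minus_commute)
        have "cmod (cinner u (X u) - cinner (Dm x) (X (Dm x))) \<le> norm (u - Dm x) * (K * (2 * norm u + 1))"
          using nd by (intro quad_approx[OF X(1) Mcsub K u DinM]) (auto simp: \<delta>_def)
        also have "\<dots> \<le> \<delta> * B"
          using nd K \<delta> unfolding B_def by (intro mult_mono) (auto simp: add_nonneg_nonneg)
        also have "\<dots> \<le> (e / B) * B" using B by (intro mult_right_mono) (auto simp: \<delta>_def)
        also have "\<dots> = e" using B by simp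
        finally show ?thesis by blast
      qed
      have "\<bar>Im (cinner u (X u))\<bar> \<le> 0"
      proof (rule field_le_epsilon)
        fix e :: real assume "e > 0"
        from approx[OF this] obtain x where x: "cmod (cinner u (X u) - cinner (Dm x) (X (Dm x))) \<le> e" by blast
        have "\<bar>Im (cinner u (X u))\<bar> = \<bar>Im (cinner u (X u) - cinner (Dm x) (X (Dm x)))\<bar>" using hv by simp
        also have "\<dots> \<le> cmod (cinner u (X u) - cinner (Dm x) (X (Dm x)))" by (rule abs_Im_le_cmod)
        finally show "\<bar>Im (cinner u (X u))\<bar> \<le> 0 + e" using x by simp
      qed
      moreover have "- Re (cinner u (X u)) \<le> 0"
        proof (rule field_le_epsilon)
          fix e :: real assume "e > 0"
          from approx[OF this] obtain x where x: "cmod (cinner u (X u) - cinner (Dm x) (X (Dm x))) \<le> e" by blast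
          have "- Re (cinner u (X u)) \<le> Re (cinner (Dm x) (X (Dm x))) - Re (cinner u (X u))" using hv by simp
          also have "\<dots> \<le> \<bar>Re (cinner u (X u) - cinner (Dm x) (X (Dm x)))\<bar>" by simp
          also have "\<dots> \<le> cmod (cinner u (X u) - cinner (Dm x) (X (Dm x)))" by (rule abs_Re_le_cmod)
          finally show "- Re (cinner u (X u)) \<le> 0 + e" using x by simp
        qed
      ultimately show "Im (cinner u (X u)) = 0 \<and> 0 \<le> Re (cinner u (X u))" by simp
    qed
  qed
qed

end

theorem mainTheorem7:
  fixes A S P :: "'a::chilbert \<Rightarrow> 'a"
  assumes "P_contraction A S P"
  defines "T \<equiv> (\<lambda>x. x - adj A (A x) - cscale (1/4) (adj S (S x)))"
    and "D \<equiv> defect_op P"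
    and "M \<equiv> defect_space P"
  shows "((\<exists>X. bounded_op_on M X \<and> numerical_radius M X \<le> 1 \<and> (\<forall>x. T x = D (X (D x))))
           \<longleftrightarrow> (op_le (\<lambda>x. - T x) (D \<circ> D) \<and> op_le T (D \<circ> D)))
    \<and> (\<forall>X Y. bounded_op_on M X \<and> numerical_radius M X \<le> 1 \<and> (\<forall>x. T x = D (X (D x))) \<longrightarrow>
              bounded_op_on M Y \<and> numerical_radius M Y \<le> 1 \<and> (\<forall>x. T x = D (Y (D x))) \<longrightarrow>
              (\<forall>x\<in>M. X x = Y x))
    \<and> (\<forall>X. bounded_op_on M X \<and> numerical_radius M X \<le> 1 \<and> (\<forall>x. T x = D (X (D x))) \<longrightarrow>
           (positive_on M X \<longleftrightarrow>
              op_le (\<lambda>x. adj A (A x) + cscale (1/4) (adj S (S x))) id))"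
proof -
  interpret pcon A S P by unfold_locales (rule assms(1))
  have TT: "T = Tm" unfolding T_def Tm_def ..
  have DD: "D = Dm" unfolding D_def Dm_def ..
  have MM: "M = Mm" unfolding M_def Mm_def ..
  show ?thesis
    unfolding TT DD MM
  proof (intro conjI allI impI)
    show "(\<exists>X. bounded_op_on Mm X \<and> numerical_radius Mm X \<le> 1 \<and> (\<forall>x. Tm x = Dm (X (Dm x))))
           \<longleftrightarrow> (op_le (\<lambda>x. - Tm x) (Dm \<circ> Dm) \<and> op_le Tm (Dm \<circ> Dm))"
      using part1_fwd part1_bwd by blast
  next
    fix X Y
    assume "bounded_op_on Mm X \<and> numerical_radius Mm X \<le> 1 \<and> (\<forall>x. Tm x = Dm (X (Dm x)))"
      and "bounded_op_on Mm Y \<and> numerical_radius Mm Y \<le> 1 \<and> (\<forall>x. Tm x = Dm (Y (Dm x)))"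
    then show "\<forall>x\<in>Mm. X x = Y x" using part2 by blast
  next
    fix X
    assume "bounded_op_on Mm X \<and> numerical_radius Mm X \<le> 1 \<and> (\<forall>x. Tm x = Dm (X (Dm x)))"
    then show "positive_on Mm X \<longleftrightarrow> op_le (\<lambda>x. adj A (A x) + cscale (1/4) (adj S (S x))) id"
      using part3 by blast
  qed
qed


end
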